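(* Let $n\ge3$ and $1\le s\le n-1$. Let $I,J\subseteq\{1,\dots,n\}$ with $|I|=s$, $|J|=s+1$, $n\in J$; put $m(J):=\max(J\setminus\{n\})$, and let $i\in CI$ and $j\in J\setminus\{m(J)\}$. Then $\theta_{m(J),j}(J)\in(1+\mathfrak a_{n,s})^*$ and $$\deg_{n,I,i}\big(\theta_{m(J),j}(J)\big)=\begin{cases}-1,& I=J\setminus\{m(J)\},\ i=m(J),\\ 1,& I=J\setminus\{j\},\ i=j,\\ 0,&\text{otherwise}.\end{cases}$$
   Context: $K$ is a field, $\mathbb N=\{0,1,\dots\}$. $\mathbb S_n$: $K$-algebra generated by $x_1,\dots,x_n,y_1,\dots,y_n$ with relations $y_ix_i=1$, $[x_i,y_j]=[x_i,x_j]=[y_i,y_j]=0$ ($i\neq j$). $E_{st}(i):=x_i^sy_i^t-x_i^{s+1}y_i^{t+1}$, $e_i:=E_{00}(i)$, $e_I:=\prod_{i\in I}e_i$, $E_{\alpha\beta}(I):=\prod_{i\in I}E_{\alpha_i\beta_i}(i)$. $\theta_{ij}(J):=(1+(y_i-1)e_{J\setminus\{i\}})(1+(x_j-1)e_{J\setminus\{j\}})$. $\mathfrak p_i$ = ideal generated by $e_i$, $\mathfrak p_I:=\prod_{i\in I}\mathfrak p_i$, $\mathfrak a_{n,s}:=\sum_{|I|=s}\mathfrak p_I$, $\mathfrak a_{n,n+1}:=0$; $(1+\mathfrak b)^*$ = units of $\mathbb S_n$ in $1+\mathfrak b$. $CI$ = complement of $I$; $\mathbb S_{CI}$ = subalgebra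 generated by $x_k,y_k$, $k\in CI$; $L_{CI}:=K[x_k^{\pm1}:k\in CI]$, with surjection $\mathbb S_{CI}\to L_{CI}$, $x_k\mapsto x_k$, $y_k\mapsto x_k^{-1}$ (kernel generated by the $e_k$, $k\in CI$). Definition of $\det_I$ and $\deg_{n,I,i}$ for $|I|=s<n$: let $\pi:K+\mathfrak a_{n,s}\to Q:=(K+\mathfrak a_{n,s})/\mathfrak a_{n,s+1}$. Then $Q=K\oplus\bigoplus_{|I'|=s}\overline{\mathfrak p}_{I'}$ with $\overline{\mathfrak p}_{I'}$ the image of $\mathfrak p_{I'}$, $\overline{\mathfrak p}_{I'}\overline{\mathfrak p}_{I''}=0$ for $I'\ne I''$, and $\overline{\mathfrak p}_{I}\simeq M_\infty(L_{CI})$ (finitary $\mathbb N^I\times\mathbb N^I$ matrices) via $\overline{aE_{\alpha\beta}(I)}\mapsto\bar a E_{\alpha\beta}$, $a\in\mathbb S_{CI}$. For $u\in(1+\mathfrak a_{n,s})^*$ write $\pi(u)=1+\sum_{|I'|=s}\bar u_{I'}$, $\bar u_{I'}\in\overline{\mathfrak p}_{I'}$; then $1+\bar u_I$ corresponds to a matrix in $\mathrm{GL}_\infty(L_{CI})$ and $\det_I(u)\in L_{CI}^*$ is its determinant; $\det_I:(1+\mathfrak a_{n,s})^*\to L_{CI}^*$ is a group homomorphism. Since $L_{CI}^*=\{\lambda\prod_{k\in CI}x_k^{\alpha_k}:\lambda\in K^*,\alpha_k\in\mathbb Z\}$, for $i\in CI$ define $\deg_{n,I,i}(u):=$ the exponent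 $\alpha_i$ of $x_i$ in $\det_I(u)$. *)

theory Defs
  imports "HOL-Library.Function_Algebras" "HOL-Library.Poly_Mapping"
          "HOL-Combinatorics.Permutations"
begin

section \<open>The Jacobson algebra S_n in its monomial (normal form) model\<close>

text \<open>A monomial x^alpha y^beta (alpha, beta : exponent vectors, indexed by nat;
  in S_n they vanish outside {1..n}).  Multiplication of monomials uses
  (x^a y^b)(x^c y^d) = x^(a + (c - b)) y^(d + (b - c)) in each coordinate, which
  encodes the relations y_i x_i = 1 and commutation of distinct indices.\<close>

type_synonym mono = "(nat \<Rightarrow> nat) \<times> (nat \<Rightarrow> nat)"
type_synonym 'k sel = "mono \<Rightarrow> 'k"

definition supp :: "('a \<Rightarrow> 'k::zero) \<Rightarrow> 'a set" where
  "supp f = {m. f m \<noteq> 0}"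

definition mmul :: "mono \<Rightarrow> mono \<Rightarrow> mono" where
  "mmul p q = ((\<lambda>k. fst p k + (fst q k - snd p k)), (\<lambda>k. snd q k + (snd p k - fst q k)))"

definition smul :: "'k::comm_ring_1 sel \<Rightarrow> 'k sel \<Rightarrow> 'k sel" where
  "smul f g = (\<lambda>m. \<Sum>pq \<in> {pq \<in> supp f \<times> supp g. mmul (fst pq) (snd pq) = m}.
                       f (fst pq) * g (snd pq))"

definition mono1 :: mono where "mono1 = ((\<lambda>_. 0), (\<lambda>_. 0))"

definition sone :: "'k::comm_ring_1 sel" where
  "sone = (\<lambda>m. if m = mono1 then 1 else 0)"

definition delta :: "nat \<Rightarrow> nat \<Rightarrow> nat" where
  "delta i = (\<lambda>k. if k = i then 1 else 0)"

definition sx :: "nat \<Rightarrow> 'k::comm_ring_1 sel" where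
  "sx i = (\<lambda>m. if m = (delta i, (\<lambda>_. 0)) then 1 else 0)"

definition sy :: "nat \<Rightarrow> 'k::comm_ring_1 sel" where
  "sy i = (\<lambda>m. if m = ((\<lambda>_. 0), delta i) then 1 else 0)"

definition spow :: "'k::comm_ring_1 sel \<Rightarrow> nat \<Rightarrow> 'k sel" where
  "spow f k = ((smul f) ^^ k) sone"

definition sprod_list :: "'k::comm_ring_1 sel list \<Rightarrow> 'k sel" where
  "sprod_list fs = foldr smul fs sone"

definition mono_on :: "nat set \<Rightarrow> mono \<Rightarrow> bool" where
  "mono_on C m \<longleftrightarrow> (\<forall>k. k \<notin> C \<longrightarrow> fst m k = 0 \<and> snd m k = 0)"

definition SC :: "nat set \<Rightarrow> 'k::comm_ring_1 sel set" where
  "SC C = {f. finite (supp f) \<and> (\<forall>m \<in> supp f. mono_on C m)}"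

abbreviation Sn :: "nat \<Rightarrow> 'k::comm_ring_1 sel set" where
  "Sn n \<equiv> SC {1..n}"

definition EE :: "nat \<Rightarrow> nat \<Rightarrow> nat \<Rightarrow> 'k::comm_ring_1 sel" where
  "EE s t i = smul (spow (sx i) s) (spow (sy i) t)
              - smul (spow (sx i) (s + 1)) (spow (sy i) (t + 1))"

definition ee :: "nat \<Rightarrow> 'k::comm_ring_1 sel" where
  "ee i = EE 0 0 i"

definition eI :: "nat set \<Rightarrow> 'k::comm_ring_1 sel" where
  "eI I = sprod_list (map ee (sorted_list_of_set I))"

definition EI :: "(nat \<Rightarrow> nat) \<Rightarrow> (nat \<Rightarrow> nat) \<Rightarrow> nat set \<Rightarrow> 'k::comm_ring_1 sel" where
  "EI \<alpha> \<beta> I = sprod_list (map (\<lambda>i. EE (\<alpha> i) (\<beta> i) i) (sorted_list_of_set I))"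

definition theta :: "nat \<Rightarrow> nat \<Rightarrow> nat set \<Rightarrow> 'k::comm_ring_1 sel" where
  "theta i j J = smul (sone + smul (sy i - sone) (eI (J - {i})))
                      (sone + smul (sx j - sone) (eI (J - {j})))"

inductive_set addcl :: "'k::comm_ring_1 sel set \<Rightarrow> 'k sel set" for X where
  zero: "0 \<in> addcl X"
| base: "x \<in> X \<Longrightarrow> x \<in> addcl X"
| add:  "a \<in> addcl X \<Longrightarrow> b \<in> addcl X \<Longrightarrow> a + b \<in> addcl X"

definition ideal_gen :: "nat \<Rightarrow> 'k::comm_ring_1 sel set \<Rightarrow> 'k sel set" where
  "ideal_gen n G = addcl {smul (smul a g) b | a g b. a \<in> Sn n \<and> g \<in> G \<and> b \<in> Sn n}"

definition pid :: "nat \<Rightarrow> nat \<Rightarrow> 'k::comm_ring_1 sel set" where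
  "pid n i = ideal_gen n {ee i}"

definition iprod :: "'k::comm_ring_1 sel set \<Rightarrow> 'k sel set \<Rightarrow> 'k sel set" where
  "iprod A B = addcl {smul a b | a b. a \<in> A \<and> b \<in> B}"

definition pI :: "nat \<Rightarrow> nat set \<Rightarrow> 'k::comm_ring_1 sel set" where
  "pI n I = foldr iprod (map (pid n) (sorted_list_of_set I)) (Sn n)"

text \<open>a_{n,s}; for s = n+1 there is no such I, so this is the zero ideal.\<close>
definition aid :: "nat \<Rightarrow> nat \<Rightarrow> 'k::comm_ring_1 sel set" where
  "aid n s = addcl (\<Union> {pI n I | I. I \<subseteq> {1..n} \<and> card I = s})"

definition sunit :: "nat \<Rightarrow> 'k::comm_ring_1 sel \<Rightarrow> bool" where
  "sunit n u \<longleftrightarrow> u \<in> Sn n \<and> (\<exists>v \<in> Sn n. smul u v = sone \<and> smul v u = sone)"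

definition one_plus_units :: "nat \<Rightarrow> 'k::comm_ring_1 sel set \<Rightarrow> 'k sel set" where
  "one_plus_units n B = {u. sunit n u \<and> u - sone \<in> B}"

section \<open>Laurent polynomials L_C and the surjection S_C -> L_C\<close>

type_synonym 'k lau = "(nat \<Rightarrow>\<^sub>0 int) \<Rightarrow>\<^sub>0 'k"

definition expo :: "mono \<Rightarrow> (nat \<Rightarrow>\<^sub>0 int)" where
  "expo m = Abs_poly_mapping (\<lambda>k. int (fst m k) - int (snd m k))"

text \<open>x_k \<mapsto> x_k, y_k \<mapsto> x_k^{-1}: the monomial x^a y^b goes to x^(a-b).\<close>
definition lphi :: "'k::comm_ring_1 sel \<Rightarrow> 'k lau" where
  "lphi f = (\<Sum>m \<in> supp f. Poly_Mapping.single (expo m) (f m))"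

text \<open>Finitary determinant of 1 + M, M a finitary matrix indexed by N^I.\<close>
definition fdet :: "((nat \<Rightarrow> nat) \<Rightarrow> (nat \<Rightarrow> nat) \<Rightarrow> 'a::comm_ring_1) \<Rightarrow> 'a" where
  "fdet M = (let F = {\<alpha>. \<exists>\<beta>. M \<alpha> \<beta> \<noteq> 0 \<or> M \<beta> \<alpha> \<noteq> 0} in
     \<Sum>p \<in> {p. p permutes F}. of_int (sign p) *
        (\<Prod>a \<in> F. (if p a = a then 1 else 0) + M a (p a)))"

text \<open>A: a finitary N^I x N^I matrix over S_{CI} such that
  u - 1 \<equiv> sum A_{alpha beta} E_{alpha beta}(I) modulo the other components
  p_{I'} (|I'| = s, I' \<noteq> I) and a_{n,s+1}; i.e. its image represents the
  component bar-u_I of pi(u) - 1 in bar-p_I.\<close>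
definition is_Irep :: "nat \<Rightarrow> nat set \<Rightarrow> 'k::comm_ring_1 sel
     \<Rightarrow> ((nat \<Rightarrow> nat) \<Rightarrow> (nat \<Rightarrow> nat) \<Rightarrow> 'k sel) \<Rightarrow> bool" where
  "is_Irep n I u A \<longleftrightarrow>
     (\<forall>\<alpha> \<beta>. A \<alpha> \<beta> \<in> SC ({1..n} - I)) \<and>
     finite {(\<alpha>, \<beta>). A \<alpha> \<beta> \<noteq> 0} \<and>
     (\<forall>\<alpha> \<beta>. A \<alpha> \<beta> \<noteq> 0 \<longrightarrow> (\<forall>k. k \<notin> I \<longrightarrow> \<alpha> k = 0 \<and> \<beta> k = 0)) \<and>
     (u - sone) - (\<Sum>(\<alpha>, \<beta>) \<in> {(\<alpha>, \<beta>). A \<alpha> \<beta> \<noteq> 0}. smul (A \<alpha> \<beta>) (EI \<alpha> \<beta> I))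
       \<in> addcl (\<Union> {pI n I' | I'. I' \<subseteq> {1..n} \<and> card I' = card I \<and> I' \<noteq> I}
                \<union> aid n (card I + 1))"

definition detI :: "nat \<Rightarrow> nat set \<Rightarrow> 'k::comm_ring_1 sel \<Rightarrow> 'k lau" where
  "detI n I u = (let A = (SOME A. is_Irep n I u A) in fdet (\<lambda>\<alpha> \<beta>. lphi (A \<alpha> \<beta>)))"

text \<open>Exponent of x_i in det_I(u) = lambda * prod x_k^{alpha_k}.\<close>
definition degI :: "nat \<Rightarrow> nat set \<Rightarrow> nat \<Rightarrow> 'k::comm_ring_1 sel \<Rightarrow> int" where
  "degI n I i u = Poly_Mapping.lookup (THE \<gamma>. \<exists>c. c \<noteq> 0 \<and> detI n I u = Poly_Mapping.single \<gamma> c) i"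

end

theory Submission
  imports Defs
begin



section \<open>Monoid of monomials\<close>

lemma mmul_assoc: "mmul (mmul p q) r = mmul p (mmul q r)"
  unfolding mmul_def by (auto simp: fun_eq_iff)

lemma mmul_one_left: "mmul mono1 q = q" and mmul_one_right: "mmul p mono1 = p"
  unfolding mmul_def mono1_def by (auto simp: fun_eq_iff)

typedef bm = "UNIV :: mono set" morphisms Rep_bm Abs_bm by simp

instantiation bm :: monoid_add
begin
definition plus_bm :: "bm \<Rightarrow> bm \<Rightarrow> bm" where
  "plus_bm p q = Abs_bm (mmul (Rep_bm p) (Rep_bm q))"
definition zero_bm :: bm where "zero_bm = Abs_bm mono1"
instance
  by standard (simp_all add: plus_bm_def zero_bm_def Abs_bm_inverse Rep_bm_inverse
        mmul_assoc mmul_one_left mmul_one_right)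
end

lemma Abs_bm_plus: "Abs_bm p + Abs_bm q = Abs_bm (mmul p q)"
  by (simp add: plus_bm_def Abs_bm_inverse)

lemma Rep_bm_plus: "Rep_bm (a + b) = mmul (Rep_bm a) (Rep_bm b)"
  by (simp add: plus_bm_def Abs_bm_inverse)

abbreviation lk where "lk \<equiv> Poly_Mapping.lookup"
abbreviation sg where "sg \<equiv> Poly_Mapping.single"
abbreviation ks where "ks \<equiv> Poly_Mapping.keys"

section \<open>Transfer to the monoid ring\<close>

abbreviation fin :: "'k::comm_ring_1 sel \<Rightarrow> bool" where "fin f \<equiv> finite (supp f)"

definition P :: "'k::comm_ring_1 sel \<Rightarrow> (bm \<Rightarrow>\<^sub>0 'k)" where
  "P f = Abs_poly_mapping (\<lambda>b. f (Rep_bm b))"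

lemma fin_comp: "fin f \<Longrightarrow> finite {b. f (Rep_bm b) \<noteq> 0}"
proof -
  assume "fin f"
  have "{b. f (Rep_bm b) \<noteq> 0} = Abs_bm ` supp f"
    by (auto simp: supp_def image_iff Abs_bm_inverse intro: Rep_bm_inverse[symmetric])
  then show ?thesis using \<open>fin f\<close> by simp
qed

lemma lookup_P: "fin f \<Longrightarrow> lk (P f) b = f (Rep_bm b)"
  unfolding P_def by (simp add: Abs_poly_mapping_inverse fin_comp)

lemma P_inj: "fin f \<Longrightarrow> fin g \<Longrightarrow> P f = P g \<Longrightarrow> f = g"
proof (rule ext)
  fix m assume "fin f" "fin g" "P f = P g"
  then have "lk (P f) (Abs_bm m) = lk (P g) (Abs_bm m)" by simp
  then show "f m = g m" using \<open>fin f\<close> \<open>fin g\<close> by (simp add: lookup_P Abs_bm_inverse)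
qed

lemma fin_add: "fin f \<Longrightarrow> fin g \<Longrightarrow> fin (f + g)"
  by (rule finite_subset[of _ "supp f \<union> supp g"]) (auto simp: supp_def)
lemma fin_diff: "fin f \<Longrightarrow> fin g \<Longrightarrow> fin (f - g)"
  by (rule finite_subset[of _ "supp f \<union> supp g"]) (auto simp: supp_def)
lemma fin_zero: "fin 0"
  by (simp add: supp_def)
lemma fin_sone: "fin sone"
  by (rule finite_subset[of _ "{mono1}"]) (auto simp: supp_def sone_def)

lemma P_add: "fin f \<Longrightarrow> fin g \<Longrightarrow> P (f + g) = P f + P g"
  by (rule poly_mapping_eqI) (simp add: lookup_P fin_add lookup_add)
lemma P_diff: "fin f \<Longrightarrow> fin g \<Longrightarrow> P (f - g) = P f - P g"
  by (rule poly_mapping_eqI) (simp add: lookup_P fin_diff lookup_minus)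
lemma P_zero: "P 0 = 0"
  by (rule poly_mapping_eqI) (simp add: lookup_P fin_zero)
lemma Rep_bm_eq: "Rep_bm k = m \<longleftrightarrow> k = Abs_bm m"
  by (metis Abs_bm_inverse Rep_bm_inverse UNIV_I)

lemma P_sone: "P sone = 1"
  by (rule poly_mapping_eqI) (simp add: lookup_P[OF fin_sone] lookup_one when_def zero_bm_def
      Rep_bm_eq, simp add: sone_def Rep_bm_eq)

lemma lk_P_nz: "fin f \<Longrightarrow> lk (P f) a \<noteq> 0 \<Longrightarrow> a \<in> Abs_bm ` supp f"
proof -
  assume "fin f" "lk (P f) a \<noteq> 0"
  then have "Rep_bm a \<in> supp f" by (simp add: lookup_P supp_def)
  then show ?thesis by (metis Rep_bm_inverse image_eqI)
qed

lemma fin_smul: "fin f \<Longrightarrow> fin g \<Longrightarrow> fin (smul f g)"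
proof -
  assume ff: "fin f" and fg: "fin g"
  have "supp (smul f g) \<subseteq> (\<lambda>pq. mmul (fst pq) (snd pq)) ` (supp f \<times> supp g)"
  proof
    fix m assume "m \<in> supp (smul f g)"
    then have "smul f g m \<noteq> 0" by (simp add: supp_def)
    then obtain pq where "pq \<in> {pq \<in> supp f \<times> supp g. mmul (fst pq) (snd pq) = m}"
    proof -
      have "{pq \<in> supp f \<times> supp g. mmul (fst pq) (snd pq) = m} \<noteq> {}"
        using \<open>smul f g m \<noteq> 0\<close> unfolding smul_def by (intro notI) simp
      then show ?thesis using that by blast
    qed
    then show "m \<in> (\<lambda>pq. mmul (fst pq) (snd pq)) ` (supp f \<times> supp g)" by auto
  qed
  then show ?thesis by (rule finite_subset) (use ff fg in auto)
qed

lemma P_smul: "fin f \<Longrightarrow> fin g \<Longrightarrow> P (smul f g) = P f * P g"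
proof (rule poly_mapping_eqI)
  fix k assume ff: "fin f" and fg: "fin g"
  have "lk (P f * P g) k = prod_fun (lk (P f)) (lk (P g)) k"
    by (simp add: lookup_mult prod_fun_def)
  also have "\<dots> = (\<Sum>(a, b). lk (P f) a * lk (P g) b when k = a + b)"
    by (rule prod_fun_unfold_prod) (simp_all add: lookup_P ff fg fin_comp)
  also have "\<dots> = (\<Sum>ab \<in> Abs_bm ` supp f \<times> Abs_bm ` supp g.
        (\<lambda>(a, b). lk (P f) a * lk (P g) b when k = a + b) ab)"
  proof (rule Sum_any.expand_superset)
    show "finite (Abs_bm ` supp f \<times> Abs_bm ` supp g)" using ff fg by simp
    show "{a. (case a of (a, b) \<Rightarrow> lk (P f) a * lk (P g) b when k = a + b) \<noteq> 0}
       \<subseteq> Abs_bm ` supp f \<times> Abs_bm ` supp g"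
    proof (clarify)
      fix a b assume "(lk (P f) a * lk (P g) b when k = a + b) \<noteq> 0"
      then have "lk (P f) a \<noteq> 0" "lk (P g) b \<noteq> 0" by (auto simp: when_def split: if_splits)
      then show "a \<in> Abs_bm ` supp f \<and> b \<in> Abs_bm ` supp g" using lk_P_nz ff fg by blast
    qed
  qed
  also have "\<dots> = (\<Sum>pq \<in> supp f \<times> supp g. f (fst pq) * g (snd pq) when k = Abs_bm (fst pq) + Abs_bm (snd pq))"
  proof -
    have "Abs_bm ` supp f \<times> Abs_bm ` supp g = map_prod Abs_bm Abs_bm ` (supp f \<times> supp g)"
      by (simp add: map_prod_surj_on)
    moreover have "inj_on (map_prod Abs_bm Abs_bm) (supp f \<times> supp g)"
      by (rule map_prod_inj_on) (auto intro: inj_onI simp: Abs_bm_inject)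
    ultimately show ?thesis
      by (simp add: sum.reindex lookup_P ff fg Abs_bm_inverse case_prod_beta)
  qed
  also have "\<dots> = (\<Sum>pq \<in> {pq \<in> supp f \<times> supp g. mmul (fst pq) (snd pq) = Rep_bm k}. f (fst pq) * g (snd pq))"
    using ff fg by (subst sum.inter_filter) (auto simp: when_def Abs_bm_plus Rep_bm_eq Abs_bm_inverse Rep_bm_inverse intro!: sum.cong)
  also have "\<dots> = lk (P (smul f g)) k"
    by (subst lookup_P[OF fin_smul[OF ff fg]]) (simp add: smul_def)
  finally show "lk (P (smul f g)) k = lk (P f * P g) k" by (rule sym)
qed




lemma SC_fin: "f \<in> SC C \<Longrightarrow> fin f"
  by (simp add: SC_def)

lemma SC_add: assumes f: "f \<in> SC C" and g: "g \<in> SC C" shows "f + g \<in> SC C"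
proof -
  have "\<forall>m\<in>supp (f + g). Defs.mono_on C m"
  proof
    fix m assume "m \<in> supp (f + g)"
    then have "f m \<noteq> 0 \<or> g m \<noteq> 0" by (auto simp: supp_def)
    then show "Defs.mono_on C m" using f g unfolding SC_def supp_def by blast
  qed
  then show ?thesis using f g by (simp add: SC_def fin_add)
qed
lemma SC_diff: assumes f: "f \<in> SC C" and g: "g \<in> SC C" shows "f - g \<in> SC C"
proof -
  have "\<forall>m\<in>supp (f - g). Defs.mono_on C m"
  proof
    fix m assume "m \<in> supp (f - g)"
    then have "f m \<noteq> 0 \<or> g m \<noteq> 0" by (auto simp: supp_def)
    then show "Defs.mono_on C m" using f g unfolding SC_def supp_def by blast
  qed
  then show ?thesis using f g by (simp add: SC_def fin_diff)
qed
lemma SC_zero: "0 \<in> SC C"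
  unfolding SC_def by (auto simp: fin_zero supp_def)
lemma SC_sone: "sone \<in> SC C"
  unfolding SC_def by (auto simp: fin_sone supp_def sone_def mono_on_def mono1_def)

lemma mono_on_mmul: "mono_on C p \<Longrightarrow> mono_on C q \<Longrightarrow> mono_on C (mmul p q)"
  by (simp add: mono_on_def mmul_def)

lemma SC_smul: "f \<in> SC C \<Longrightarrow> g \<in> SC C \<Longrightarrow> smul f g \<in> SC C"
proof -
  assume f: "f \<in> SC C" and g: "g \<in> SC C"
  have "\<forall>m\<in>supp (smul f g). mono_on C m"
  proof
    fix m assume "m \<in> supp (smul f g)"
    then have "smul f g m \<noteq> 0" by (simp add: supp_def)
    then have "{pq \<in> supp f \<times> supp g. mmul (fst pq) (snd pq) = m} \<noteq> {}"
      unfolding smul_def by (intro notI) simp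
    then obtain p q where "p \<in> supp f" "q \<in> supp g" "m = mmul p q" by auto
    then show "mono_on C m" using f g by (auto simp: SC_def intro: mono_on_mmul)
  qed
  then show ?thesis using f g by (simp add: SC_def fin_smul)
qed

lemma SC_sx: "k \<in> C \<Longrightarrow> sx k \<in> SC C"
  unfolding SC_def
  by (auto simp: supp_def sx_def mono_on_def delta_def intro: finite_subset[of _ "{(delta k, \<lambda>_. 0)}"])
lemma SC_sy: "k \<in> C \<Longrightarrow> sy k \<in> SC C"
  unfolding SC_def
  by (auto simp: supp_def sy_def mono_on_def delta_def intro: finite_subset[of _ "{(\<lambda>_. 0, delta k)}"])

lemma SC_spow: "f \<in> SC C \<Longrightarrow> spow f t \<in> SC C"
  by (induct t) (simp_all add: spow_def SC_sone SC_smul)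

lemma SC_EE: "k \<in> C \<Longrightarrow> EE s t k \<in> SC C"
  by (simp add: EE_def SC_diff SC_smul SC_spow SC_sx SC_sy)

lemma SC_ee: "k \<in> C \<Longrightarrow> ee k \<in> SC C"
  by (simp add: ee_def SC_EE)

lemma SC_sprod_list: "(\<forall>f \<in> set fs. f \<in> SC C) \<Longrightarrow> sprod_list fs \<in> SC C"
  by (induct fs) (simp_all add: sprod_list_def SC_sone SC_smul)

lemma SC_eI: "finite I \<Longrightarrow> I \<subseteq> C \<Longrightarrow> eI I \<in> SC C"
  unfolding eI_def by (rule SC_sprod_list) (auto simp: SC_ee)

lemma SC_EI: "finite I \<Longrightarrow> I \<subseteq> C \<Longrightarrow> EI a b I \<in> SC C"
  unfolding EI_def by (rule SC_sprod_list) (auto simp: SC_EE)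

lemma SC_mono: "C \<subseteq> C' \<Longrightarrow> SC C \<subseteq> SC C'"
  unfolding SC_def mono_on_def by auto

definition mon :: "(nat \<Rightarrow> nat) \<Rightarrow> (nat \<Rightarrow> nat) \<Rightarrow> (bm \<Rightarrow>\<^sub>0 'k::comm_ring_1)" where
  "mon a b = sg (Abs_bm (a, b)) 1"

lemma mon_mult: "mon a b * mon c d = (mon (\<lambda>k. a k + (c k - b k)) (\<lambda>k. d k + (b k - c k)) :: bm \<Rightarrow>\<^sub>0 'k::comm_ring_1)"
  by (simp add: mon_def mult_single Abs_bm_plus mmul_def)

lemma mon_comm:
  assumes "\<And>l. (a l = 0 \<and> b l = 0) \<or> (c l = 0 \<and> d l = 0)"
  shows "mon a b * mon c d = (mon c d * mon a b :: bm \<Rightarrow>\<^sub>0 'k::comm_ring_1)"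
proof -
  have "(\<lambda>k. a k + (c k - b k)) = (\<lambda>k. c k + (a k - d k))"
       "(\<lambda>k. d k + (b k - c k)) = (\<lambda>k. b k + (d k - a k))"
  proof (rule_tac [!] ext)
    fix k show "a k + (c k - b k) = c k + (a k - d k)" using assms[of k] by auto
    show "d k + (b k - c k) = b k + (d k - a k)" using assms[of k] by auto
  qed
  then show ?thesis by (simp add: mon_mult)
qed

lemma mon_one: "mon (\<lambda>_. 0) (\<lambda>_. 0) = 1"
proof -
  have "Abs_bm ((\<lambda>_. 0), (\<lambda>_. 0)) = 0" by (simp add: zero_bm_def mono1_def)
  then show ?thesis by (simp add: mon_def)
qed

abbreviation "dz \<equiv> (\<lambda>_::nat. 0::nat)"

definition Xm :: "nat \<Rightarrow> (bm \<Rightarrow>\<^sub>0 'k::comm_ring_1)" where "Xm k = mon (delta k) dz"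
definition Ym :: "nat \<Rightarrow> (bm \<Rightarrow>\<^sub>0 'k::comm_ring_1)" where "Ym k = mon dz (delta k)"
definition Ee :: "nat \<Rightarrow> (bm \<Rightarrow>\<^sub>0 'k::comm_ring_1)" where "Ee k = 1 - Xm k * Ym k"

lemma fin_sx: "fin (sx k)" using SC_sx[of k "{k}"] SC_fin by blast
lemma fin_sy: "fin (sy k)" using SC_sy[of k "{k}"] SC_fin by blast

lemma P_sx: "P (sx k) = Xm k"
  by (rule poly_mapping_eqI) (subst lookup_P[OF fin_sx], auto simp: Xm_def mon_def lookup_single when_def sx_def Rep_bm_eq)
lemma P_sy: "P (sy k) = Ym k"
  by (rule poly_mapping_eqI) (subst lookup_P[OF fin_sy], auto simp: Ym_def mon_def lookup_single when_def sy_def Rep_bm_eq)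

lemma fin_spow: "fin f \<Longrightarrow> fin (spow f t)"
  by (induct t) (simp_all add: spow_def fin_sone fin_smul)
lemma P_spow: "fin f \<Longrightarrow> P (spow f t) = P f ^ t"
proof (induct t)
  case 0 then show ?case by (simp add: spow_def P_sone)
next
  case (Suc t)
  have "spow f (Suc t) = smul f (spow f t)" by (simp add: spow_def)
  then show ?case using Suc by (simp add: P_smul fin_spow)
qed

lemma Xm_pow: "Xm k ^ s = mon (\<lambda>l. if l = k then s else 0) dz"
  by (induct s) (auto simp: mon_one Xm_def mon_mult delta_def intro!: arg_cong2[where f=mon])
lemma Ym_pow: "Ym k ^ s = mon dz (\<lambda>l. if l = k then s else 0)"
  by (induct s) (auto simp: mon_one Ym_def mon_mult delta_def intro!: arg_cong2[where f=mon])

definition Em :: "nat \<Rightarrow> nat \<Rightarrow> nat \<Rightarrow> (bm \<Rightarrow>\<^sub>0 'k::comm_ring_1)" where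
  "Em s t k = mon (\<lambda>l. if l = k then s else 0) (\<lambda>l. if l = k then t else 0)
     - mon (\<lambda>l. if l = k then s + 1 else 0) (\<lambda>l. if l = k then t + 1 else 0)"

lemma XY_pow: "Xm k ^ s * Ym k ^ t = mon (\<lambda>l. if l = k then s else 0) (\<lambda>l. if l = k then t else 0)"
  by (simp add: Xm_pow Ym_pow mon_mult)

lemma fin_EE: "fin (EE s t k)" using SC_EE[of k "{k}"] SC_fin by blast
lemma fin_ee: "fin (ee k)" by (simp add: ee_def fin_EE)

lemma P_EE: "P (EE s t k) = Em s t k"
  unfolding EE_def Em_def
  by (simp add: P_diff P_smul fin_smul fin_spow fin_sx fin_sy P_spow P_sx P_sy XY_pow[symmetric])

lemma Em00: "Em 0 0 k = Ee k"
proof -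
  have e1: "(\<lambda>l. if l = k then (0::nat) else 0) = dz" by auto
  have e2: "(\<lambda>l. if l = k then (0::nat) + 1 else 0) = delta k" by (auto simp: delta_def)
  have e3: "Xm k * Ym k = (mon (delta k) (delta k) :: bm \<Rightarrow>\<^sub>0 'a)"
    by (simp add: Xm_def Ym_def mon_mult)
  show ?thesis unfolding Em_def Ee_def e1 e2 e3 by (simp add: mon_one)
qed

lemma P_ee: "P (ee k) = Ee k"
  by (simp add: ee_def P_EE Em00)

lemma fin_sprod_list: "(\<forall>f \<in> set fs. fin f) \<Longrightarrow> fin (sprod_list fs)"
  by (induct fs) (simp_all add: sprod_list_def fin_sone fin_smul)

lemma P_sprod_list: "(\<forall>f \<in> set fs. fin f) \<Longrightarrow> P (sprod_list fs) = foldr (*) (map P fs) 1"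
proof (induct fs)
  case Nil then show ?case by (simp add: sprod_list_def P_sone)
next
  case (Cons f fs)
  have fs: "\<forall>f\<in>set fs. fin f" and ff: "fin f" using Cons.prems by auto
  have "P (sprod_list (f # fs)) = P (smul f (sprod_list fs))" by (simp add: sprod_list_def)
  also have "\<dots> = P f * P (sprod_list fs)" by (rule P_smul[OF ff fin_sprod_list[OF fs]])
  also have "\<dots> = P f * foldr (*) (map P fs) 1" using Cons.hyps[OF fs] by simp
  finally show ?case by simp
qed

lemma fin_eI: "fin (eI I)"
  unfolding eI_def by (rule fin_sprod_list) (auto simp: fin_ee)
lemma fin_EI: "fin (EI a b I)"
  unfolding EI_def by (rule fin_sprod_list) (auto simp: fin_EE)

lemma P_eI: "P (eI I) = foldr (*) (map Ee (sorted_list_of_set I)) 1"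
  unfolding eI_def by (subst P_sprod_list) (auto simp: fin_ee P_ee comp_def)
lemma P_EI: "P (EI a b I) = foldr (*) (map (\<lambda>k. Em (a k) (b k) k) (sorted_list_of_set I)) 1"
  unfolding EI_def by (subst P_sprod_list) (auto simp: fin_EE P_EE comp_def)

lemma YX: "Ym k * Xm k = 1"
  by (simp add: Xm_def Ym_def mon_mult mon_one)

lemma XX_comm: "k \<noteq> l \<Longrightarrow> Xm k * Xm l = Xm l * Xm k"
  unfolding Xm_def by (rule mon_comm) (auto simp: delta_def)
lemma XY_comm: "k \<noteq> l \<Longrightarrow> Xm k * Ym l = Ym l * Xm k"
  unfolding Xm_def Ym_def by (rule mon_comm) (auto simp: delta_def)
lemma YY_comm: "k \<noteq> l \<Longrightarrow> Ym k * Ym l = Ym l * Ym k"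
  unfolding Ym_def by (rule mon_comm) (auto simp: delta_def)




lemma foldr_comm:
  fixes z :: "'a::ring_1"
  shows "(\<forall>x\<in>set L. z * x = x * z) \<Longrightarrow> z * foldr (*) L 1 = foldr (*) L 1 * z"
proof (induct L)
  case Nil then show ?case by simp
next
  case (Cons a L)
  then have "z * a = a * z" and "z * foldr (*) L 1 = foldr (*) L 1 * z" by auto
  then show ?case by (simp add: mult.assoc[symmetric]) (simp add: mult.assoc)
qed

lemma foldr_remove1:
  fixes f :: "'b \<Rightarrow> 'a::ring_1"
  assumes "x \<in> set L" and "\<forall>y\<in>set L. f x * f y = f y * f x"
  shows "foldr (*) (map f L) 1 = f x * foldr (*) (map f (remove1 x L)) 1"
  using assms
proof (induct L)
  case Nil then show ?case by simp
next
  case (Cons a L)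
  show ?case
  proof (cases "a = x")
    case True then show ?thesis by simp
  next
    case False
    then have xL: "x \<in> set L" using Cons.prems by simp
    have "\<forall>y\<in>set L. f x * f y = f y * f x" using Cons.prems by simp
    then have "foldr (*) (map f (a # L)) 1 = f a * (f x * foldr (*) (map f (remove1 x L)) 1)"
      using Cons.hyps xL by simp
    also have "\<dots> = f x * (f a * foldr (*) (map f (remove1 x L)) 1)"
    proof -
      have "f x * f a = f a * f x" using Cons.prems by simp
      then show ?thesis by (metis mult.assoc)
    qed
    finally show ?thesis using False by simp
  qed
qed

lemma foldr_idem:
  fixes f :: "'b \<Rightarrow> 'a::ring_1"
  assumes "\<forall>x\<in>set L. f x * f x = f x" and "\<forall>x\<in>set L. \<forall>y\<in>set L. f x * f y = f y * f x"
  shows "foldr (*) (map f L) 1 * foldr (*) (map f L) 1 = foldr (*) (map f L) 1"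
  using assms
proof (induct L)
  case Nil then show ?case by simp
next
  case (Cons a L)
  let ?p = "foldr (*) (map f L) 1"
  have ih: "?p * ?p = ?p" using Cons by simp
  have h: "\<And>y. y \<in> set L \<Longrightarrow> f a * f y = f y * f a"
    using Cons.prems(2) by (meson list.set_intros)
  have c: "f a * ?p = ?p * f a"
  proof (rule foldr_comm, rule ballI)
    fix x assume "x \<in> set (map f L)"
    then obtain y where y: "y \<in> set L" "x = f y" by auto
    show "f a * x = x * f a" using h[OF y(1)] y(2) by simp
  qed
  have "(f a * ?p) * (f a * ?p) = f a * ((?p * f a) * ?p)" by (simp add: mult.assoc)
  also have "\<dots> = f a * ((f a * ?p) * ?p)" using c by simp
  also have "\<dots> = (f a * f a) * (?p * ?p)" by (simp add: mult.assoc)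
  also have "\<dots> = f a * ?p" using Cons.prems(1) ih by simp
  finally show ?case by simp
qed

lemma theta_inv_abs:
  fixes xi yi xj yj c :: "'a::ring_1"
  assumes r1: "yi*xi = 1" and r2: "yj*xj = 1"
    and c1: "xj*xi = xi*xj" and c2: "xj*yi = yi*xj" and c3: "yj*xi = xi*yj" and c4: "yj*yi = yi*yj"
    and d1: "c*xi = xi*c" and d2: "c*yi = yi*c" and d3: "c*xj = xj*c" and d4: "c*yj = yj*c"
    and cc: "c*c = c"
  shows "(1 + (yi - 1)*((1 - xj*yj)*c)) * (1 + (xj - 1)*((1 - xi*yi)*c)) *
         ((1 + (yj - 1)*((1 - xi*yi)*c)) * (1 + (xi - 1)*((1 - xj*yj)*c))) = 1"
    and "((1 + (yj - 1)*((1 - xi*yi)*c)) * (1 + (xi - 1)*((1 - xj*yj)*c))) *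
         ((1 + (yi - 1)*((1 - xj*yj)*c)) * (1 + (xj - 1)*((1 - xi*yi)*c))) = 1"
proof -
  have l: "\<And>z. yi*(xi*z) = z" "\<And>z. yj*(xj*z) = z"
      "\<And>z. xj*(xi*z) = xi*(xj*z)" "\<And>z. xj*(yi*z) = yi*(xj*z)" "\<And>z. yj*(xi*z) = xi*(yj*z)" "\<And>z. yj*(yi*z) = yi*(yj*z)"
      "\<And>z. c*(xi*z) = xi*(c*z)" "\<And>z. c*(yi*z) = yi*(c*z)" "\<And>z. c*(xj*z) = xj*(c*z)" "\<And>z. c*(yj*z) = yj*(c*z)"
      "\<And>z. c*(c*z) = c*z"
    using assms by (simp_all add: mult.assoc[symmetric])
  show "(1 + (yi - 1)*((1 - xj*yj)*c)) * (1 + (xj - 1)*((1 - xi*yi)*c)) *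
         ((1 + (yj - 1)*((1 - xi*yi)*c)) * (1 + (xi - 1)*((1 - xj*yj)*c))) = 1"
    by (simp add: algebra_simps assms l)
  show "((1 + (yj - 1)*((1 - xi*yi)*c)) * (1 + (xi - 1)*((1 - xj*yj)*c))) *
         ((1 + (yi - 1)*((1 - xj*yj)*c)) * (1 + (xj - 1)*((1 - xi*yi)*c))) = 1"
    by (simp add: algebra_simps assms l)
qed

lemma comm_mult: fixes z :: "'a::ring_1"
  shows "z*u = u*z \<Longrightarrow> z*v = v*z \<Longrightarrow> z*(u*v) = (u*v)*z"
  by (metis mult.assoc)
lemma comm_one_minus: fixes z :: "'a::ring_1"
  shows "z*w = w*z \<Longrightarrow> z*(1-w) = (1-w)*z"
  by (simp add: algebra_simps)

lemma Ee_comm_X: "k \<noteq> l \<Longrightarrow> Ee k * Xm l = Xm l * Ee k"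
  unfolding Ee_def
  by (rule sym, rule comm_one_minus, rule comm_mult) (simp_all add: XX_comm XY_comm)
lemma Ee_comm_Y: "k \<noteq> l \<Longrightarrow> Ee k * Ym l = Ym l * Ee k"
  unfolding Ee_def
  by (rule sym, rule comm_one_minus, rule comm_mult) (simp_all add: YY_comm XY_comm)
lemma Ee_comm: "Ee k * Ee l = Ee l * Ee k"
proof (cases "k = l")
  case False
  show ?thesis unfolding Ee_def[of l]
    by (rule comm_one_minus, rule comm_mult) (use False in \<open>simp_all add: Ee_comm_X Ee_comm_Y\<close>)
qed simp

lemma Ee_idem: "Ee k * Ee k = Ee k"
proof -
  have "Xm k * Ym k * (Xm k * Ym k) = Xm k * Ym k"
    by (simp add: mult.assoc[symmetric]) (simp add: mult.assoc YX)
  then show ?thesis unfolding Ee_def by (simp add: algebra_simps)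
qed

lemma PeI_split: "finite S \<Longrightarrow> k \<in> S \<Longrightarrow> P (eI S) = Ee k * P (eI (S - {k}))"
  unfolding P_eI
  by (subst sorted_list_of_set_remove, simp, rule foldr_remove1) (auto simp: Ee_comm)

lemma PeI_comm:
  assumes "finite S" "k \<notin> S"
  shows "P (eI S) * Xm k = Xm k * P (eI S)" "P (eI S) * Ym k = Ym k * P (eI S)"
proof -
  show "P (eI S) * Xm k = Xm k * P (eI S)" unfolding P_eI
    by (subst foldr_comm[symmetric]) (use assms in \<open>auto intro!: Ee_comm_X[symmetric]\<close>)
  show "P (eI S) * Ym k = Ym k * P (eI S)" unfolding P_eI
    by (subst foldr_comm[symmetric]) (use assms in \<open>auto intro!: Ee_comm_Y[symmetric]\<close>)
qed

lemma PeI_idem: "P (eI S) * P (eI S) = P (eI S)"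
  unfolding P_eI by (rule foldr_idem) (auto simp: Ee_idem Ee_comm)




lemmas fins = fin_smul fin_add fin_diff fin_sone fin_sx fin_sy fin_eI fin_ee fin_EI fin_EE

lemma addcl_sub: "X \<subseteq> SC C \<Longrightarrow> addcl X \<subseteq> SC C"
proof
  fix x assume X: "X \<subseteq> SC C" and x: "x \<in> addcl X"
  from x show "x \<in> SC C"
    by induct (use X SC_zero SC_add in blast)+
qed

lemma ideal_gen_sub: "G \<subseteq> Sn n \<Longrightarrow> ideal_gen n G \<subseteq> Sn n"
  unfolding ideal_gen_def by (rule addcl_sub) (auto intro!: SC_smul)

lemma iprod_sub: "A \<subseteq> Sn n \<Longrightarrow> B \<subseteq> Sn n \<Longrightarrow> iprod A B \<subseteq> Sn n"
  unfolding iprod_def by (rule addcl_sub) (auto intro!: SC_smul)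

lemma pid_sub: "k \<in> {1..n} \<Longrightarrow> pid n k \<subseteq> Sn n"
  unfolding pid_def by (rule ideal_gen_sub) (simp add: SC_ee)

lemma foldr_pI_sub: "set L \<subseteq> {1..n} \<Longrightarrow> foldr iprod (map (pid n) L) (Sn n) \<subseteq> Sn n"
proof (induct L)
  case (Cons a L)
  then have a: "a \<in> {1..n}" and L: "set L \<subseteq> {1..n}" by auto
  show ?case using iprod_sub[OF pid_sub[OF a] Cons.hyps[OF L]] by simp
qed simp

lemma pI_sub: "I \<subseteq> {1..n} \<Longrightarrow> pI n I \<subseteq> Sn n"
  unfolding pI_def by (rule foldr_pI_sub) (simp add: finite_subset)

lemma iprod_base: "a \<in> A \<Longrightarrow> b \<in> B \<Longrightarrow> smul a b \<in> iprod A B"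
  unfolding iprod_def by (blast intro: addcl.base)

lemma foldr_pI_mem:
  assumes "set L \<subseteq> {1..n}" and "g \<in> Sn n" and "h \<in> Sn n"
  shows "smul (smul g (sprod_list (map ee L))) h \<in> foldr iprod (map (pid n) L) (Sn n)"
  using assms
proof (induct L arbitrary: g h)
  case Nil then show ?case by (simp add: sprod_list_def SC_smul SC_sone)
next
  case (Cons k L)
  let ?Q = "sprod_list (map ee L)"
  have k: "k \<in> {1..n}" and L: "set L \<subseteq> {1..n}" using Cons.prems by auto
  have a: "smul (smul g (ee k)) sone \<in> pid n k"
    unfolding pid_def ideal_gen_def using Cons.prems(2) SC_sone by (blast intro: addcl.base)
  have b: "smul (smul sone ?Q) h \<in> foldr iprod (map (pid n) L) (Sn n)"
    by (rule Cons.hyps[OF L SC_sone Cons.prems(3)])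
  have fg: "fin g" and fh: "fin h" using Cons.prems SC_fin by blast+
  have fQ: "fin ?Q" by (rule fin_sprod_list) (auto simp: fin_ee)
  have eq: "smul (smul g (sprod_list (map ee (k # L)))) h
      = smul (smul (smul g (ee k)) sone) (smul (smul sone ?Q) h)"
  proof -
    have e: "sprod_list (map ee (k # L)) = smul (ee k) ?Q" by (simp add: sprod_list_def)
    show ?thesis unfolding e
      by (intro P_inj) (simp_all add: fins fg fh fQ P_smul P_sone mult.assoc)
  qed
  show ?case unfolding eq using iprod_base[OF a b] by simp
qed

lemma pI_mem:
  assumes "I \<subseteq> {1..n}" and "g \<in> Sn n" and "h \<in> Sn n"
  shows "smul (smul g (eI I)) h \<in> pI n I"
  unfolding pI_def eI_def
proof (rule foldr_pI_mem)
  have "finite I" using assms(1) finite_subset by blast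
  then show "set (sorted_list_of_set I) \<subseteq> {1..n}" using assms(1) by simp
qed (use assms in auto)

section \<open>theta\<close>

lemma P_theta:
  assumes "finite J" "m \<in> J" "j \<in> J" "m \<noteq> j"
  shows "P (theta m j J :: 'k::comm_ring_1 sel) =
    (1 + (Ym m - 1) * ((1 - Xm j * Ym j) * P (eI (J - {m, j})))) *
    (1 + (Xm j - 1) * ((1 - Xm m * Ym m) * P (eI (J - {m, j}))))"
proof -
  have "P (eI (J - {m}) :: 'k sel) = Ee j * P (eI (J - {m} - {j}))"
    by (rule PeI_split) (use assms in auto)
  moreover have "P (eI (J - {j}) :: 'k sel) = Ee m * P (eI (J - {j} - {m}))"
    by (rule PeI_split) (use assms in auto)
  moreover have "J - {m} - {j} = J - {m, j}" "J - {j} - {m} = J - {m, j}" by auto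
  ultimately show ?thesis
    unfolding theta_def by (simp add: fins P_smul P_add P_diff P_sone P_sx P_sy Ee_def)
qed

definition thinv :: "nat \<Rightarrow> nat \<Rightarrow> nat set \<Rightarrow> 'k::comm_ring_1 sel" where
  "thinv i j J = smul (sone + smul (sy j - sone) (eI (J - {j})))
                      (sone + smul (sx i - sone) (eI (J - {i})))"

lemma P_thinv:
  assumes "finite J" "m \<in> J" "j \<in> J" "m \<noteq> j"
  shows "P (thinv m j J :: 'k::comm_ring_1 sel) =
    (1 + (Ym j - 1) * ((1 - Xm m * Ym m) * P (eI (J - {m, j})))) *
    (1 + (Xm m - 1) * ((1 - Xm j * Ym j) * P (eI (J - {m, j}))))"
proof -
  have "P (eI (J - {m}) :: 'k sel) = Ee j * P (eI (J - {m} - {j}))"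
    by (rule PeI_split) (use assms in auto)
  moreover have "P (eI (J - {j}) :: 'k sel) = Ee m * P (eI (J - {j} - {m}))"
    by (rule PeI_split) (use assms in auto)
  moreover have "J - {m} - {j} = J - {m, j}" "J - {j} - {m} = J - {m, j}" by auto
  ultimately show ?thesis
    unfolding thinv_def by (simp add: fins P_smul P_add P_diff P_sone P_sx P_sy Ee_def)
qed

lemma theta_inv:
  assumes "finite J" "m \<in> J" "j \<in> J" "m \<noteq> j"
  shows "smul (theta m j J) (thinv m j J) = (sone :: 'k::comm_ring_1 sel)"
    and "smul (thinv m j J) (theta m j J) = (sone :: 'k::comm_ring_1 sel)"
proof -
  let ?c = "P (eI (J - {m, j})) :: bm \<Rightarrow>\<^sub>0 'k"
  have nm: "m \<notin> J - {m, j}" and nj: "j \<notin> J - {m, j}" and fJ: "finite (J - {m,j})" using assms by auto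
  note abs = theta_inv_abs[of "Ym m" "Xm m" "Ym j" "Xm j" ?c, OF YX YX
      XX_comm[OF assms(4)[symmetric]] XY_comm[OF assms(4)[symmetric]] XY_comm[OF assms(4), symmetric]
      YY_comm[OF assms(4)[symmetric]]
      PeI_comm(1)[OF fJ nm] PeI_comm(2)[OF fJ nm] PeI_comm(1)[OF fJ nj] PeI_comm(2)[OF fJ nj] PeI_idem]
  have ft: "fin (theta m j J :: 'k sel)" unfolding theta_def by (simp add: fins)
  have fi: "fin (thinv m j J :: 'k sel)" unfolding thinv_def by (simp add: fins)
  show "smul (theta m j J) (thinv m j J) = (sone :: 'k sel)"
    by (rule P_inj) (simp_all add: fins ft fi P_smul P_sone P_theta[OF assms] P_thinv[OF assms] abs(1))
  show "smul (thinv m j J) (theta m j J) = (sone :: 'k sel)"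
    by (rule P_inj) (simp_all add: fins ft fi P_smul P_sone P_theta[OF assms] P_thinv[OF assms] abs(2))
qed




section \<open>The representation\<close>

definition act :: "nat set \<Rightarrow> bm \<Rightarrow> (nat \<Rightarrow> int) \<Rightarrow> (nat \<Rightarrow> int) option" where
  "act I m w = (if \<forall>k\<in>I. int (snd (Rep_bm m) k) \<le> w k
      then Some (\<lambda>k. w k + int (fst (Rep_bm m) k) - int (snd (Rep_bm m) k)) else None)"

definition tm :: "nat set \<Rightarrow> bm \<Rightarrow> (nat \<Rightarrow> int) \<Rightarrow> 'k::comm_ring_1 \<Rightarrow> ((nat \<Rightarrow> int) \<Rightarrow>\<^sub>0 'k)" where
  "tm I m w c = (case act I m w of None \<Rightarrow> 0 | Some w' \<Rightarrow> sg w' c)"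

definition rho :: "nat set \<Rightarrow> (bm \<Rightarrow>\<^sub>0 'k::comm_ring_1) \<Rightarrow> ((nat \<Rightarrow> int) \<Rightarrow>\<^sub>0 'k) \<Rightarrow> ((nat \<Rightarrow> int) \<Rightarrow>\<^sub>0 'k)" where
  "rho I f v = (\<Sum>m\<in>ks f. \<Sum>w\<in>ks v. tm I m w (lk f m * lk v w))"

lemma tm_add: "tm I m w (a + b) = tm I m w a + tm I m w b"
  by (simp add: tm_def single_add split: option.split)
lemma tm_zero: "tm I m w 0 = 0"
  by (simp add: tm_def split: option.split)

lemma rho_expand:
  assumes "finite K" "ks f \<subseteq> K" "finite W" "ks v \<subseteq> W"
  shows "rho I f v = (\<Sum>m\<in>K. \<Sum>w\<in>W. tm I m w (lk f m * lk v w))"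
proof -
  have "rho I f v = (\<Sum>m\<in>K. \<Sum>w\<in>ks v. tm I m w (lk f m * lk v w))"
    unfolding rho_def
    by (rule sum.mono_neutral_left) (use assms in \<open>auto simp: in_keys_iff tm_zero\<close>)
  also have "\<dots> = (\<Sum>m\<in>K. \<Sum>w\<in>W. tm I m w (lk f m * lk v w))"
    by (intro sum.cong refl sum.mono_neutral_left) (use assms in \<open>auto simp: in_keys_iff tm_zero\<close>)
  finally show ?thesis .
qed

lemma rho_add_left: "rho I (f + g) v = rho I f v + rho I g v"
proof -
  let ?K = "ks f \<union> ks g"
  have k: "finite ?K" "ks (f + g) \<subseteq> ?K" "ks f \<subseteq> ?K" "ks g \<subseteq> ?K"
    by (auto simp: in_keys_iff lookup_add)
  show ?thesis
    by (simp add: rho_expand[OF k(1) k(2) finite_keys subset_refl] rho_expand[OF k(1) k(3) finite_keys subset_refl]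
        rho_expand[OF k(1) k(4) finite_keys subset_refl] lookup_add distrib_right tm_add sum.distrib)
qed

lemma rho_add_right: "rho I f (v + v') = rho I f v + rho I f v'"
proof -
  let ?W = "ks v \<union> ks v'"
  have k: "finite ?W" "ks (v + v') \<subseteq> ?W" "ks v \<subseteq> ?W" "ks v' \<subseteq> ?W"
    by (auto simp: in_keys_iff lookup_add)
  show ?thesis
    by (simp add: rho_expand[OF finite_keys subset_refl k(1) k(2)] rho_expand[OF finite_keys subset_refl k(1) k(3)]
        rho_expand[OF finite_keys subset_refl k(1) k(4)] lookup_add distrib_left tm_add sum.distrib)
qed

lemma rho_zero_left: "rho I 0 v = 0" by (simp add: rho_def)
lemma rho_zero_right: "rho I f 0 = 0" by (simp add: rho_def)

lemma rho_uminus_left: "rho I (- f) v = - rho I f v"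
  using rho_add_left[of I f "- f" v] by (simp add: rho_zero_left add_eq_0_iff2)
lemma rho_diff_left: "rho I (f - g) v = rho I f v - rho I g v"
  using rho_add_left[of I f "- g" v] by (simp add: rho_uminus_left)
lemma rho_uminus_right: "rho I f (- v) = - rho I f v"
  using rho_add_right[of I f v "- v"] by (simp add: rho_zero_right add_eq_0_iff2)
lemma rho_diff_right: "rho I f (v - v') = rho I f v - rho I f v'"
  using rho_add_right[of I f v "- v'"] by (simp add: rho_uminus_right)

lemma rho_single: "rho I (sg m c) (sg w d) = tm I m w (c * d)"
  by (subst rho_expand[of "{m}" _ "{w}"]) (auto simp: tm_zero)

lemma coord1: "(int b2 + int (a2 - b1) \<le> w) = (int b2 \<le> w \<and> int a2 \<le> w + int b1 - int b2)"
  by (cases "a2 \<le> b1") auto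
lemma coord2: "w + (int a1 + int (b1 - a2)) - (int b2 + int (a2 - b1)) = (w + int b1 - int b2) + int a1 - int a2"
  by (cases "a2 \<le> b1") auto

lemma act_plus: "act I (a + b) w = (case act I b w of None \<Rightarrow> None | Some w' \<Rightarrow> act I a w')"
proof -
  have c: "(\<forall>k\<in>I. int (snd (Rep_bm (a + b)) k) \<le> w k) \<longleftrightarrow>
     (\<forall>k\<in>I. int (snd (Rep_bm b) k) \<le> w k) \<and>
     (\<forall>k\<in>I. int (snd (Rep_bm a) k) \<le> w k + int (fst (Rep_bm b) k) - int (snd (Rep_bm b) k))"
    unfolding Rep_bm_plus mmul_def by (auto simp: coord1)
  have r: "(\<lambda>k. w k + int (fst (Rep_bm (a + b)) k) - int (snd (Rep_bm (a + b)) k)) =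
     (\<lambda>k. (w k + int (fst (Rep_bm b) k) - int (snd (Rep_bm b) k)) + int (fst (Rep_bm a) k) - int (snd (Rep_bm a) k))"
    unfolding Rep_bm_plus mmul_def by (simp add: coord2)
  show ?thesis unfolding act_def c r by auto
qed

lemma rho_single_tm: "rho I (sg a c) (tm I b w d) = tm I (a + b) w (c * d)"
  by (simp add: tm_def act_plus rho_single rho_zero_right split: option.split)

lemma update_single: "a \<notin> ks f \<Longrightarrow> Poly_Mapping.update a b f = sg a b + f"
  by (rule poly_mapping_eqI) (auto simp: lookup_update lookup_add lookup_single in_keys_iff)

lemma pm_induct [case_names zero add]:
  assumes "Q 0" and "\<And>a b f. a \<notin> ks f \<Longrightarrow> b \<noteq> 0 \<Longrightarrow> Q f \<Longrightarrow> Q (sg a b + f)"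
  shows "Q f"
  by (rule update_induct) (use assms in \<open>auto simp: update_single\<close>)

lemma rho_mult_ss: "rho I (sg a c * sg b d) v = rho I (sg a c) (rho I (sg b d) v)"
proof (induct v rule: pm_induct)
  case zero then show ?case by (simp add: rho_zero_right)
next
  case (add w e v)
  then show ?case
    by (simp add: rho_add_right mult_single rho_single rho_single_tm mult.assoc)
qed

lemma rho_mult_s: "rho I (sg a c * g) v = rho I (sg a c) (rho I g v)"
proof (induct g rule: pm_induct)
  case zero then show ?case by (simp add: rho_zero_right rho_zero_left)
next
  case (add b d g)
  then show ?case
    by (simp add: distrib_left rho_add_left rho_add_right rho_mult_ss)
qed

lemma rho_mult: "rho I (f * g) v = rho I f (rho I g v)"
proof (induct f rule: pm_induct)
  case zero then show ?case by (simp add: rho_zero_left)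
next
  case (add a c f)
  then show ?case
    by (simp add: distrib_right rho_add_left rho_mult_s)
qed




definition ZA :: "nat set \<Rightarrow> 'k::comm_ring_1 sel \<Rightarrow> bool" where
  "ZA I f \<longleftrightarrow> fin f \<and> (\<forall>v. rho I (P f) v = 0)"

lemma rho_mon: "rho I (mon a b) v = (\<Sum>w\<in>ks v. tm I (Abs_bm (a, b)) w (lk v w))"
  unfolding mon_def by (subst rho_expand[of "{Abs_bm (a, b)}" _ "ks v"]) (auto simp: lookup_single)

lemma rho_Ee: "k \<notin> I \<Longrightarrow> rho I (Ee k) v = 0"
proof -
  assume k: "k \<notin> I"
  have XY: "Xm k * Ym k = (mon (delta k) (delta k) :: bm \<Rightarrow>\<^sub>0 'a)"
    by (simp add: Xm_def Ym_def mon_mult)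
  have a: "act I (Abs_bm (delta k, delta k)) w = act I (Abs_bm (dz, dz)) w" for w
    using k unfolding act_def by (auto simp: Abs_bm_inverse delta_def)
  have "rho I (Ee k) v = rho I (mon dz dz) v - rho I (mon (delta k) (delta k)) v"
    unfolding Ee_def XY mon_one[symmetric] by (rule rho_diff_left)
  also have "\<dots> = 0" unfolding rho_mon tm_def a by simp
  finally show ?thesis .
qed

lemma ZA_addcl: "(\<forall>x\<in>X. ZA I x) \<Longrightarrow> x \<in> addcl X \<Longrightarrow> ZA I x"
proof -
  assume X: "\<forall>x\<in>X. ZA I x" and x: "x \<in> addcl X"
  from x show "ZA I x"
  proof induct
    case zero
    have "\<forall>v. rho I (P 0) v = (0 :: (nat \<Rightarrow> int) \<Rightarrow>\<^sub>0 'a)" unfolding P_zero rho_zero_left by simp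
    then show ?case unfolding ZA_def using fin_zero by blast
  next
    case (base x) then show ?case using X by simp
  next
    case (add a b)
    then have "fin a" "fin b" "\<forall>v. rho I (P a) v = 0" "\<forall>v. rho I (P b) v = 0" by (auto simp: ZA_def)
    then show ?case unfolding ZA_def using fin_add[of a b] P_add[of a b] by (simp add: rho_add_left)
  qed
qed

lemma ZA_pid: "k \<notin> I \<Longrightarrow> x \<in> pid n k \<Longrightarrow> ZA I x"
  unfolding pid_def ideal_gen_def
proof (erule ZA_addcl[rotated], clarify)
  fix a b :: "'a sel" assume k: "k \<notin> I" and ab: "a \<in> Sn n" "b \<in> Sn n"
  have fa: "fin a" and fb: "fin b" using ab SC_fin by blast+
  show "ZA I (smul (smul a (ee k)) b)"
    unfolding ZA_def
    by (simp add: fins fa fb P_smul P_ee rho_mult rho_Ee[OF k] rho_zero_right)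
qed

lemma ZA_iprod_left: "(\<forall>a\<in>A. ZA I a) \<Longrightarrow> B \<subseteq> Sn n \<Longrightarrow> x \<in> iprod A B \<Longrightarrow> ZA I x"
  unfolding iprod_def
proof (erule ZA_addcl[rotated], clarify)
  fix a b :: "'a sel" assume A: "\<forall>a\<in>A. ZA I a" and B: "B \<subseteq> Sn n" and ab: "a \<in> A" "b \<in> B"
  have fa: "fin a" and za: "\<forall>v. rho I (P a) v = 0" using A ab by (auto simp: ZA_def)
  have fb: "fin b" using ab B SC_fin by blast
  show "ZA I (smul a b)" unfolding ZA_def by (simp add: fins fa fb P_smul rho_mult za)
qed

lemma ZA_iprod_right: "A \<subseteq> Sn n \<Longrightarrow> (\<forall>b\<in>B. ZA I b) \<Longrightarrow> x \<in> iprod A B \<Longrightarrow> ZA I x"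
  unfolding iprod_def
proof (erule ZA_addcl[rotated], clarify)
  fix a b :: "'a sel" assume A: "A \<subseteq> Sn n" and B: "\<forall>b\<in>B. ZA I b" and ab: "a \<in> A" "b \<in> B"
  have fb: "fin b" and zb: "\<forall>v. rho I (P b) v = 0" using B ab by (auto simp: ZA_def)
  have fa: "fin a" using ab A SC_fin by blast
  show "ZA I (smul a b)" unfolding ZA_def by (simp add: fins fa fb P_smul rho_mult zb rho_zero_right)
qed

lemma ZA_foldr:
  assumes "set L \<subseteq> {1..n}" "k \<in> set L" "k \<notin> I"
  shows "x \<in> foldr iprod (map (pid n) L) (Sn n) \<Longrightarrow> ZA I x"
  using assms
proof (induct L arbitrary: x)
  case Nil then show ?case by simp
next
  case (Cons a L)
  have a: "a \<in> {1..n}" and L: "set L \<subseteq> {1..n}" using Cons.prems by auto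
  have x: "x \<in> iprod (pid n a) (foldr iprod (map (pid n) L) (Sn n))" using Cons.prems by simp
  show ?case
  proof (cases "a = k")
    case True
    show ?thesis
      by (rule ZA_iprod_left[OF _ foldr_pI_sub[OF L] x]) (use ZA_pid Cons.prems True in blast)
  next
    case False
    then have "k \<in> set L" using Cons.prems by simp
    then show ?thesis
      by (intro ZA_iprod_right[OF pid_sub[OF a] _ x] ballI Cons.hyps[OF _ L]) (use Cons.prems in auto)
  qed
qed

lemma ZA_pI:
  assumes "I' \<subseteq> {1..n}" "\<not> I' \<subseteq> I" "x \<in> pI n I'"
  shows "ZA I x"
proof -
  obtain k where k: "k \<in> I'" "k \<notin> I" using assms by auto
  have fI: "finite I'" using assms(1) finite_subset by blast
  show ?thesis
    by (rule ZA_foldr[of "sorted_list_of_set I'" n k I x]) (use assms fI k in \<open>auto simp: pI_def\<close>)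
qed

lemma ZA_N:
  fixes x :: "'k::comm_ring_1 sel"
  assumes I: "I \<subseteq> {1..n}"
  and x: "x \<in> addcl (\<Union> {pI n I' | I'. I' \<subseteq> {1..n} \<and> card I' = card I \<and> I' \<noteq> I} \<union> aid n (card I + 1))"
  shows "ZA I x"
proof -
  have fI: "finite I" using I finite_subset by blast
  have 1: "ZA I y" if "y \<in> pI n I'" "I' \<subseteq> {1..n}" "card I' = card I" "I' \<noteq> I" for y :: "'k sel" and I'
  proof (rule ZA_pI[OF that(2) _ that(1)])
    show "\<not> I' \<subseteq> I"
    proof
      assume "I' \<subseteq> I"
      then have "I' = I" using card_subset_eq[OF fI] that(3) by blast
      then show False using that(4) by simp
    qed
  qed
  have 2: "\<forall>z\<in>\<Union> {pI n I'' | I''. I'' \<subseteq> {1..n} \<and> card I'' = card I + 1}. ZA I (z :: 'k sel)"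
  proof (rule ballI)
    fix z :: "'k sel" assume "z \<in> \<Union> {pI n I'' | I''. I'' \<subseteq> {1..n} \<and> card I'' = card I + 1}"
    then obtain I'' where z: "z \<in> pI n I''" "I'' \<subseteq> {1..n}" "card I'' = card I + 1" by blast
    have "\<not> I'' \<subseteq> I"
    proof
      assume "I'' \<subseteq> I"
      then have "card I'' \<le> card I" using card_mono[OF fI] by blast
      then show False using z(3) by simp
    qed
    then show "ZA I z" using ZA_pI z(1,2) by blast
  qed
  have 3: "ZA I y" if "y \<in> aid n (card I + 1)" for y :: "'k sel"
  proof -
    have "y \<in> addcl (\<Union> {pI n I'' | I''. I'' \<subseteq> {1..n} \<and> card I'' = card I + 1})"
      using that unfolding aid_def .
    then show ?thesis by (rule ZA_addcl[OF 2])
  qed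
  show ?thesis
  proof (rule ZA_addcl[OF _ x], rule ballI)
    fix z :: "'k sel" assume "z \<in> \<Union> {pI n I' | I'. I' \<subseteq> {1..n} \<and> card I' = card I \<and> I' \<noteq> I} \<union> aid n (card I + 1)"
    then show "ZA I z"
    proof
      assume "z \<in> \<Union> {pI n I' | I'. I' \<subseteq> {1..n} \<and> card I' = card I \<and> I' \<noteq> I}"
      then obtain I' where "z \<in> pI n I'" "I' \<subseteq> {1..n}" "card I' = card I" "I' \<noteq> I" by blast
      then show ?thesis by (rule 1)
    qed (rule 3)
  qed
qed




definition valid :: "nat set \<Rightarrow> (nat \<Rightarrow> int) \<Rightarrow> bool" where
  "valid I w \<longleftrightarrow> (\<forall>k\<in>I. 0 \<le> w k)"

lemma rho_mon_single: "rho I (mon a b) (sg w c) = tm I (Abs_bm (a, b)) w c"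
  unfolding mon_def by (simp add: rho_single)

lemma rho_one: "valid I w \<Longrightarrow> rho I 1 (sg w c) = sg w c"
proof -
  assume v: "valid I w"
  have "act I (Abs_bm (dz, dz)) w = Some w"
    using v by (simp add: act_def Abs_bm_inverse valid_def)
  then show ?thesis unfolding mon_one[symmetric] rho_mon_single tm_def by simp
qed

lemma act_kk:
  assumes "k \<in> I" "valid I w"
  shows "act I (Abs_bm (\<lambda>l. if l = k then s else 0, \<lambda>l. if l = k then t else 0)) w
       = (if int t \<le> w k then Some (w(k := w k + int s - int t)) else None)"
  using assms by (auto simp: act_def Abs_bm_inverse valid_def fun_eq_iff)

lemma rho_Em:
  assumes "k \<in> I" "valid I w"
  shows "rho I (Em s t k) (sg w 1) = (if w k = int t then sg (w(k := int s)) 1 else 0)"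
proof -
  have "rho I (Em s t k) (sg w 1) =
      tm I (Abs_bm (\<lambda>l. if l = k then s else 0, \<lambda>l. if l = k then t else 0)) w 1 -
      tm I (Abs_bm (\<lambda>l. if l = k then s + 1 else 0, \<lambda>l. if l = k then t + 1 else 0)) w 1"
    unfolding Em_def rho_diff_left rho_mon_single ..
  also have "\<dots> = (if w k = int t then sg (w(k := int s)) 1 else 0)"
    unfolding tm_def act_kk[OF assms] by (auto simp: algebra_simps)
  finally show ?thesis .
qed

lemma rho_EL:
  assumes "distinct L" "set L \<subseteq> I" "valid I w" "\<forall>k. 0 \<le> (0::int)"
  shows "rho I (foldr (*) (map (\<lambda>k. Em (a k) (b k) k) L) 1) (sg w (1::'k::comm_ring_1)) =
     (if \<forall>k\<in>set L. w k = int (b k) then sg (\<lambda>l. if l \<in> set L then int (a l) else w l) 1 else 0)"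
  using assms
proof (induct L)
  case Nil then show ?case by (simp add: rho_one)
next
  case (Cons k L)
  have kI: "k \<in> I" and kL: "k \<notin> set L" and L: "distinct L" "set L \<subseteq> I" using Cons.prems by auto
  note ih = Cons.hyps[OF L Cons.prems(3,4)]
  show ?case
  proof (cases "\<forall>k\<in>set L. w k = int (b k)")
    case False
    then show ?thesis using ih False by (auto simp: rho_mult rho_zero_right)
  next
    case True
    let ?w' = "\<lambda>l. if l \<in> set L then int (a l) else w l"
    have v: "valid I ?w'" using Cons.prems(3) by (auto simp: valid_def)
    have wk: "?w' k = w k" using kL by simp
    have "rho I (foldr (*) (map (\<lambda>k. Em (a k) (b k) k) (k # L)) 1) (sg w (1::'k))
        = rho I (Em (a k) (b k) k) (sg ?w' (1::'k))"
    proof -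
      have ih2: "rho I (foldr (*) (map (\<lambda>k. Em (a k) (b k) k) L) 1) (sg w (1::'k)) = sg ?w' 1"
        using ih True by simp
      show ?thesis by (simp only: list.map foldr.simps comp_def rho_mult ih2)
    qed
    also have "\<dots> = (if w k = int (b k) then sg (?w'(k := int (a k))) (1::'k) else 0)"
      by (simp add: rho_Em[OF kI v] wk)
    also have "\<dots> = (if \<forall>k'\<in>set (k # L). w k' = int (b k') then
        sg (\<lambda>l. if l \<in> set (k # L) then int (a l) else w l) 1 else 0)"
      using True by (auto simp: fun_eq_iff intro!: arg_cong2[where f=sg])
    finally show ?thesis .
  qed
qed

lemma rho_EI:
  assumes "finite I" "valid I w"
  shows "rho I (P (EI a b I)) (sg w (1::'k::comm_ring_1)) =
     (if \<forall>k\<in>I. w k = int (b k) then sg (\<lambda>l. if l \<in> I then int (a l) else w l) 1 else 0)"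
proof -
  have "rho I (foldr (*) (map (\<lambda>k. Em (a k) (b k) k) (sorted_list_of_set I)) 1) (sg w (1::'k)) =
     (if \<forall>k\<in>set (sorted_list_of_set I). w k = int (b k)
      then sg (\<lambda>l. if l \<in> set (sorted_list_of_set I) then int (a l) else w l) 1 else 0)"
    by (rule rho_EL) (use assms in auto)
  then show ?thesis unfolding P_EI using assms(1) by simp
qed

lemma rho_SC:
  assumes A: "A \<in> SC C" and CI: "C \<inter> I = {}" and v: "valid I w"
  shows "rho I (P A) (sg w 1) = (\<Sum>m\<in>supp A. sg (\<lambda>l. w l + int (fst m l) - int (snd m l)) (A m))"
proof -
  have fA: "fin A" using A SC_fin by blast
  have K: "ks (P A) \<subseteq> Abs_bm ` supp A" using lk_P_nz[OF fA] by (auto simp: in_keys_iff)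
  have "rho I (P A) (sg w 1) = (\<Sum>b\<in>Abs_bm ` supp A. \<Sum>w'\<in>{w}. tm I b w' (lk (P A) b * lk (sg w 1) w'))"
    by (rule rho_expand) (use fA K in auto)
  also have "\<dots> = (\<Sum>m\<in>supp A. tm I (Abs_bm m) w (A m))"
    by (subst sum.reindex) (auto simp: inj_on_def Abs_bm_inject lookup_P[OF fA] Abs_bm_inverse)
  also have "\<dots> = (\<Sum>m\<in>supp A. sg (\<lambda>l. w l + int (fst m l) - int (snd m l)) (A m))"
  proof (rule sum.cong[OF refl])
    fix m assume "m \<in> supp A"
    then have "Defs.mono_on C m" using A by (auto simp: SC_def)
    then have "\<forall>k\<in>I. snd m k = 0" using CI by (auto simp: mono_on_def)
    then have "act I (Abs_bm m) w = Some (\<lambda>l. w l + int (fst m l) - int (snd m l))"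
      using v by (simp add: act_def Abs_bm_inverse valid_def)
    then show "tm I (Abs_bm m) w (A m) = sg (\<lambda>l. w l + int (fst m l) - int (snd m l)) (A m)"
      by (simp add: tm_def)
  qed
  finally show ?thesis .
qed




definition diffm :: "mono \<Rightarrow> nat \<Rightarrow> int" where
  "diffm m = (\<lambda>l. int (fst m l) - int (snd m l))"

definition zoff :: "nat set \<Rightarrow> (nat \<Rightarrow> nat) \<Rightarrow> bool" where
  "zoff I f \<longleftrightarrow> (\<forall>k. k \<notin> I \<longrightarrow> f k = 0)"

definition Sig :: "nat set \<Rightarrow> ((nat \<Rightarrow> nat) \<Rightarrow> (nat \<Rightarrow> nat) \<Rightarrow> 'k::comm_ring_1 sel) \<Rightarrow> 'k sel" where
  "Sig I A = (\<Sum>(\<alpha>, \<beta>) \<in> {(\<alpha>, \<beta>). A \<alpha> \<beta> \<noteq> 0}. smul (A \<alpha> \<beta>) (EI \<alpha> \<beta> I))"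

lemma fin_sum: "(\<forall>x\<in>S. fin (F x)) \<Longrightarrow> fin (sum F S)"
  by (induct S rule: infinite_finite_induct) (auto simp: fin_zero fin_add)

lemma P_sum: "(\<forall>x\<in>S. fin (F x)) \<Longrightarrow> P (sum F S) = (\<Sum>x\<in>S. P (F x))"
  by (induct S rule: infinite_finite_induct) (auto simp: P_zero P_add fin_sum)

lemma rho_sum_left: "rho I (sum F S) v = (\<Sum>x\<in>S. rho I (F x) v)"
  by (induct S rule: infinite_finite_induct) (auto simp: rho_zero_left rho_add_left)

lemma term_lemma:
  fixes A :: "'k::comm_ring_1 sel"
  assumes fI: "finite I" and A: "A \<in> SC C" and CI: "C \<inter> I = {}"
    and za: "zoff I a" and zb: "zoff I b" and za0: "zoff I a0" and zb0: "zoff I b0"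
    and D: "\<forall>k\<in>I. D k = 0"
  shows "lk (rho I (P (smul A (EI a b I))) (sg (\<lambda>k. int (b0 k)) 1)) (\<lambda>k. int (a0 k) + D k)
     = (if a = a0 \<and> b = b0 then (\<Sum>m\<in>{m\<in>supp A. diffm m = D}. A m) else 0)"
proof -
  have fA: "fin A" using A SC_fin by blast
  have v0: "valid I (\<lambda>k. int (b0 k))" by (simp add: valid_def)
  have bb: "(\<forall>k\<in>I. int (b0 k) = int (b k)) \<longleftrightarrow> b = b0"
    using zb zb0 unfolding zoff_def by (auto simp: fun_eq_iff) (metis)
  have aa: "(\<lambda>l. if l \<in> I then int (a l) else int (b0 l)) = (\<lambda>l. int (a l))"
    using za zb0 unfolding zoff_def by (auto simp: fun_eq_iff)
  have r: "rho I (P (smul A (EI a b I))) (sg (\<lambda>k. int (b0 k)) 1) =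
      (if b = b0 then rho I (P A) (sg (\<lambda>l. int (a l)) 1) else 0)"
    unfolding P_smul[OF fA fin_EI] rho_mult rho_EI[OF fI v0] bb aa
    by (simp add: rho_zero_right)
  show ?thesis
  proof (cases "b = b0")
    case False then show ?thesis using r by simp
  next
    case True
    have va: "valid I (\<lambda>l. int (a l))" by (simp add: valid_def)
    have key: "(\<lambda>l. int (a l) + int (fst m l) - int (snd m l)) = (\<lambda>k. int (a0 k) + D k)
        \<longleftrightarrow> a = a0 \<and> diffm m = D" if m: "m \<in> supp A" for m
    proof -
      have "Defs.mono_on C m" using A m by (auto simp: SC_def)
      then have z: "\<forall>k\<in>I. fst m k = 0 \<and> snd m k = 0" using CI by (auto simp: mono_on_def)
      show ?thesis
      proof
        assume h: "(\<lambda>l. int (a l) + int (fst m l) - int (snd m l)) = (\<lambda>k. int (a0 k) + D k)"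
        have "a k = a0 k" for k
        proof (cases "k \<in> I")
          case True
          then show ?thesis using fun_cong[OF h, of k] z D by auto
        next
          case False
          then show ?thesis using za za0 by (auto simp: zoff_def)
        qed
        then have "a = a0" by auto
        then show "a = a0 \<and> diffm m = D" using h by (auto simp: diffm_def fun_eq_iff algebra_simps)
      next
        assume "a = a0 \<and> diffm m = D"
        then show "(\<lambda>l. int (a l) + int (fst m l) - int (snd m l)) = (\<lambda>k. int (a0 k) + D k)"
          by (auto simp: diffm_def fun_eq_iff)
      qed
    qed
    have "lk (rho I (P A) (sg (\<lambda>l. int (a l)) 1)) (\<lambda>k. int (a0 k) + D k)
        = (\<Sum>m\<in>supp A. if a = a0 \<and> diffm m = D then A m else 0)"
      unfolding rho_SC[OF A CI va] lookup_sum
      by (rule sum.cong[OF refl]) (simp add: lookup_single when_def key)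
    also have "\<dots> = (if a = a0 then (\<Sum>m\<in>{m\<in>supp A. diffm m = D}. A m) else 0)"
      using fA by (auto simp: sum.inter_filter)
    finally show ?thesis using r True by simp
  qed
qed

lemma extract_lem:
  fixes A :: "(nat \<Rightarrow> nat) \<Rightarrow> (nat \<Rightarrow> nat) \<Rightarrow> 'k::comm_ring_1 sel"
  assumes fI: "finite I" and A: "\<forall>a b. A a b \<in> SC C" and CI: "C \<inter> I = {}"
    and fS: "finite {(a, b). A a b \<noteq> 0}"
    and z: "\<forall>a b. A a b \<noteq> 0 \<longrightarrow> zoff I a \<and> zoff I b"
    and za0: "zoff I a0" and zb0: "zoff I b0" and D: "\<forall>k\<in>I. D k = 0"
  shows "lk (rho I (P (Sig I A)) (sg (\<lambda>k. int (b0 k)) 1)) (\<lambda>k. int (a0 k) + D k)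
     = (\<Sum>m\<in>{m\<in>supp (A a0 b0). diffm m = D}. A a0 b0 m)"
proof -
  let ?S = "{(a, b). A a b \<noteq> 0}"
  let ?X = "(\<Sum>m\<in>{m\<in>supp (A a0 b0). diffm m = D}. A a0 b0 m)"
  have fins: "\<forall>x\<in>?S. fin (case x of (a, b) \<Rightarrow> smul (A a b) (EI a b I))"
    using A SC_fin by (auto intro!: fin_smul fin_EI)
  have "lk (rho I (P (Sig I A)) (sg (\<lambda>k. int (b0 k)) 1)) (\<lambda>k. int (a0 k) + D k)
     = (\<Sum>x\<in>?S. lk (rho I (P (case x of (a, b) \<Rightarrow> smul (A a b) (EI a b I))) (sg (\<lambda>k. int (b0 k)) 1)) (\<lambda>k. int (a0 k) + D k))"
    unfolding Sig_def P_sum[OF fins] rho_sum_left lookup_sum ..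
  also have "\<dots> = (\<Sum>x\<in>?S. if x = (a0, b0) then ?X else 0)"
  proof (rule sum.cong[OF refl], clarify)
    fix a b assume "A a b \<noteq> 0"
    then have "zoff I a" "zoff I b" using z by auto
    then show "lk (rho I (P (smul (A a b) (EI a b I))) (sg (\<lambda>k. int (b0 k)) 1)) (\<lambda>k. int (a0 k) + D k)
        = (if (a, b) = (a0, b0) then ?X else 0)"
      using term_lemma[OF fI spec[OF spec[OF A, of a], of b] CI _ _ za0 zb0 D] by simp
  qed
  also have "\<dots> = (if (a0, b0) \<in> ?S then ?X else 0)"
    using fS by (simp add: sum.delta')
  also have "\<dots> = ?X" by (auto simp: supp_def)
  finally show ?thesis .
qed




lemma lk_expo:
  assumes "Defs.mono_on {1..n} m"
  shows "lk (expo m) = diffm m"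
proof -
  have "finite {k. int (fst m k) - int (snd m k) \<noteq> 0}"
    by (rule finite_subset[of _ "{1..n}"]) (use assms in \<open>auto simp: mono_on_def\<close>)
  then show ?thesis unfolding expo_def diffm_def by (simp add: Abs_poly_mapping_inverse)
qed

lemma lk_lphi:
  assumes "f \<in> SC {1..n}"
  shows "lk (lphi f) \<delta> = (\<Sum>m\<in>{m\<in>supp f. diffm m = lk \<delta>}. f m)"
proof -
  have ff: "fin f" using assms SC_fin by blast
  have "lk (lphi f) \<delta> = (\<Sum>m\<in>supp f. if diffm m = lk \<delta> then f m else 0)"
    unfolding lphi_def lookup_sum
  proof (rule sum.cong[OF refl])
    fix m assume "m \<in> supp f"
    then have "Defs.mono_on {1..n} m" using assms by (simp add: SC_def)
    then have "lk (expo m) = diffm m" by (rule lk_expo)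
    then have "expo m = \<delta> \<longleftrightarrow> diffm m = lk \<delta>" by (metis poly_mapping.lookup_inject)
    then show "lk (sg (expo m) (f m)) \<delta> = (if diffm m = lk \<delta> then f m else 0)"
      by (simp add: lookup_single when_def)
  qed
  also have "\<dots> = (\<Sum>m\<in>{m\<in>supp f. diffm m = lk \<delta>}. f m)" using ff by (simp add: sum.inter_filter)
  finally show ?thesis .
qed

lemma Irep_rho:
  fixes u :: "'k::comm_ring_1 sel"
  assumes I: "I \<subseteq> {1..n}" and u: "u \<in> Sn n" and r: "is_Irep n I u A"
  shows "rho I (P (Sig I A)) v = rho I (P (u - sone)) v"
proof -
  have A: "\<forall>a b. A a b \<in> SC ({1..n} - I)" using r by (simp add: is_Irep_def)
  have fS: "fin (Sig I A)" unfolding Sig_def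
    by (rule fin_sum) (use A SC_fin in \<open>auto intro!: fin_smul fin_EI\<close>)
  have fu: "fin (u - sone)" using u SC_fin fin_diff fin_sone by blast
  have "ZA I ((u - sone) - Sig I A)"
    by (rule ZA_N[OF I]) (use r in \<open>simp add: is_Irep_def Sig_def\<close>)
  then have "rho I (P ((u - sone) - Sig I A)) v = 0" by (simp add: ZA_def)
  then show ?thesis unfolding P_diff[OF fu fS] rho_diff_left by simp
qed

lemma lphi_unique:
  fixes u :: "'k::comm_ring_1 sel"
  assumes I: "I \<subseteq> {1..n}" and u: "u \<in> Sn n" and r: "is_Irep n I u A" and r0: "is_Irep n I u A0"
  shows "lphi (A a b) = lphi (A0 a b)"
proof -
  have fI: "finite I" using I finite_subset by blast
  have CI: "({1..n} - I) \<inter> I = {}" by auto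
  have A: "\<forall>a b. A a b \<in> SC ({1..n} - I)" and fS: "finite {(a, b). A a b \<noteq> 0}"
    and z: "\<forall>a b. A a b \<noteq> 0 \<longrightarrow> zoff I a \<and> zoff I b" using r by (auto simp: is_Irep_def zoff_def)
  have A0: "\<forall>a b. A0 a b \<in> SC ({1..n} - I)" and fS0: "finite {(a, b). A0 a b \<noteq> 0}"
    and z0: "\<forall>a b. A0 a b \<noteq> 0 \<longrightarrow> zoff I a \<and> zoff I b" using r0 by (auto simp: is_Irep_def zoff_def)
  have eqr: "rho I (P (Sig I A)) v = rho I (P (Sig I A0)) v" for v
    using Irep_rho[OF I u r] Irep_rho[OF I u r0] by simp
  have sub: "SC ({1..n} - I) \<subseteq> (SC {1..n} :: 'k sel set)" by (rule SC_mono) auto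
  show ?thesis
  proof (cases "zoff I a \<and> zoff I b")
    case False
    then have "A a b = 0" "A0 a b = 0" using z z0 by auto
    then show ?thesis by simp
  next
    case True
    show ?thesis
    proof (rule poly_mapping_eqI)
      fix \<delta>
      have Aab: "A a b \<in> SC {1..n}" "A0 a b \<in> SC {1..n}" using A A0 sub by auto
      show "lk (lphi (A a b)) \<delta> = lk (lphi (A0 a b)) \<delta>"
      proof (cases "\<forall>k\<in>I. lk \<delta> k = 0")
        case True2: True
        show ?thesis
          unfolding lk_lphi[OF Aab(1)] lk_lphi[OF Aab(2)]
          using extract_lem[OF fI A CI fS z _ _ True2, of a b] extract_lem[OF fI A0 CI fS0 z0 _ _ True2, of a b]
            True eqr by simp
      next
        case False
        then obtain k where k: "k \<in> I" "lk \<delta> k \<noteq> 0" by auto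
        have e: "{m \<in> supp (B a b). diffm m = lk \<delta>} = {}" if "\<forall>a b. B a b \<in> SC ({1..n} - I)"
          for B :: "(nat \<Rightarrow> nat) \<Rightarrow> (nat \<Rightarrow> nat) \<Rightarrow> 'k sel"
        proof -
          have "diffm m k = 0" if "m \<in> supp (B a b)" for m
            using that \<open>\<forall>a b. B a b \<in> SC ({1..n} - I)\<close> k(1)
            by (auto simp: SC_def mono_on_def diffm_def)
          then show ?thesis using k(2) by (auto dest: fun_cong[of _ _ k])
        qed
        show ?thesis unfolding lk_lphi[OF Aab(1)] lk_lphi[OF Aab(2)] e[OF A] e[OF A0] by simp
      qed
    qed
  qed
qed

lemma detI_eq:
  fixes u :: "'k::comm_ring_1 sel"
  assumes I: "I \<subseteq> {1..n}" and u: "u \<in> Sn n" and r0: "is_Irep n I u A0"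
  shows "detI n I u = fdet (\<lambda>a b. lphi (A0 a b))"
proof -
  let ?A = "SOME A. is_Irep n I u A"
  have r: "is_Irep n I u ?A" using someI[of "\<lambda>A. is_Irep n I u A" A0] r0 by simp
  have "(\<lambda>a b. lphi (?A a b)) = (\<lambda>a b. lphi (A0 a b))"
    using lphi_unique[OF I u r r0] by blast
  then show ?thesis unfolding detI_def Let_def by simp
qed

lemma fdet_single:
  "fdet (\<lambda>a b. if a = x \<and> b = x then c else 0) = 1 + (c :: 'a::comm_ring_1)"
proof (cases "c = 0")
  case True
  have F: "{a. \<exists>b. (if a = x \<and> b = x then c else 0) \<noteq> 0 \<or> (if b = x \<and> a = x then c else 0) \<noteq> 0} = {}"
    using True by auto
  show ?thesis unfolding fdet_def Let_def F using True by simp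
next
  case False
  have F: "{a. \<exists>b. (if a = x \<and> b = x then c else 0) \<noteq> 0 \<or> (if b = x \<and> a = x then c else 0) \<noteq> 0} = {x}"
    using False by auto
  show ?thesis unfolding fdet_def Let_def F by simp
qed

lemma degI_eq:
  assumes "detI n I u = sg \<gamma> (1::'k::field)"
  shows "degI n I i u = lk \<gamma> i"
proof -
  have "(THE \<gamma>'. \<exists>c. c \<noteq> 0 \<and> detI n I u = sg \<gamma>' c) = \<gamma>"
  proof (rule the_equality)
    show "\<exists>c. c \<noteq> 0 \<and> detI n I u = sg \<gamma> c" using assms by (intro exI[of _ 1]) simp
    fix \<gamma>' assume "\<exists>c. c \<noteq> 0 \<and> detI n I u = sg \<gamma>' c"
    then obtain c where c: "c \<noteq> 0" "sg \<gamma>' c = sg \<gamma> (1::'k)" using assms by auto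
    then have "lk (sg \<gamma>' c) \<gamma>' = lk (sg \<gamma> (1::'k)) \<gamma>'" by simp
    then show "\<gamma>' = \<gamma>" using c(1) by (auto simp: lookup_single when_def split: if_splits)
  qed
  then show ?thesis unfolding degI_def by simp
qed




lemma lphi_zero: "lphi (0 :: 'k::comm_ring_1 sel) = 0"
  by (simp add: lphi_def supp_def)

lemma expo_mono1: "expo mono1 = 0"
  by (rule poly_mapping_eqI) (simp add: expo_def mono1_def Abs_poly_mapping_inverse)

lemma expo_x: "expo (delta k, dz) = sg k 1"
proof -
  have "finite {l. int (delta k l) - int 0 \<noteq> 0}"
    by (rule finite_subset[of _ "{k}"]) (auto simp: delta_def)
  then show ?thesis
    by (intro poly_mapping_eqI) (auto simp: expo_def delta_def lookup_single when_def Abs_poly_mapping_inverse)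
qed

lemma expo_y: "expo (dz, delta k) = sg k (-1)"
proof -
  have "finite {l. int 0 - int (delta k l) \<noteq> 0}"
    by (rule finite_subset[of _ "{k}"]) (auto simp: delta_def)
  then show ?thesis
    by (intro poly_mapping_eqI) (auto simp: expo_def delta_def lookup_single when_def Abs_poly_mapping_inverse)
qed

lemma lphi_gen:
  assumes "mm \<noteq> mono1" and "f = (\<lambda>x. if x = mm then 1 else 0) - sone"
  shows "lphi (f :: 'k::field sel) = sg (expo mm) 1 + sg 0 (-1)"
proof -
  have s: "supp f = {mm, mono1}"
    using assms by (auto simp: supp_def sone_def)
  have "lphi f = sg (expo mm) (f mm) + sg (expo mono1) (f mono1)"
    unfolding lphi_def s using assms(1) by simp
  also have "\<dots> = sg (expo mm) 1 + sg 0 (-1)"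
    using assms by (simp add: sone_def expo_mono1)
  finally show ?thesis .
qed

lemma one_plus_lphi_y: "1 + lphi (sy k - sone :: 'k::field sel) = sg (sg k (-1)) 1"
proof -
  have "(dz, delta k) \<noteq> mono1" by (auto simp: mono1_def delta_def fun_eq_iff)
  then have "lphi (sy k - sone :: 'k sel) = sg (expo (dz, delta k)) 1 + sg 0 (-1)"
    by (rule lphi_gen) (simp add: sy_def fun_eq_iff)
  then show ?thesis by (simp add: expo_y single_uminus)
qed

lemma one_plus_lphi_x: "1 + lphi (sx k - sone :: 'k::field sel) = sg (sg k 1) 1"
proof -
  have "(delta k, dz) \<noteq> mono1" by (auto simp: mono1_def delta_def fun_eq_iff)
  then have "lphi (sx k - sone :: 'k sel) = sg (expo (delta k, dz)) 1 + sg 0 (-1)"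
    by (rule lphi_gen) (simp add: sx_def fun_eq_iff)
  then show ?thesis by (simp add: expo_x single_uminus)
qed

lemma EI_zero: "EI dz dz I = eI I"
  by (simp add: EI_def eI_def ee_def[abs_def])

lemma Irep_single:
  fixes u g :: "'k::field sel"
  assumes g: "g \<in> SC ({1..n} - I)" and g0: "g \<noteq> 0"
    and res: "(u - sone) - smul g (eI I) \<in> addcl (\<Union> {pI n I' | I'. I' \<subseteq> {1..n} \<and> card I' = card I \<and> I' \<noteq> I} \<union> aid n (card I + 1))"
  shows "is_Irep n I u (\<lambda>a b. if a = dz \<and> b = dz then g else 0)"
proof -
  have S: "{(a, b). (if a = dz \<and> b = dz then g else 0) \<noteq> 0} = {(dz, dz)}" using g0 by auto
  show ?thesis unfolding is_Irep_def S
    using g res by (simp add: SC_zero EI_zero)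
qed

lemma Irep_zero:
  fixes u :: "'k::field sel"
  assumes res: "u - sone \<in> addcl (\<Union> {pI n I' | I'. I' \<subseteq> {1..n} \<and> card I' = card I \<and> I' \<noteq> I} \<union> aid n (card I + 1))"
  shows "is_Irep n I u (\<lambda>a b. 0)"
  unfolding is_Irep_def using res by (simp add: SC_zero)

lemma aid_add: "x \<in> aid n s \<Longrightarrow> y \<in> aid n s \<Longrightarrow> x + y \<in> aid n s"
  unfolding aid_def by (rule addcl.add)

theorem lemma5p9:
  fixes n s :: nat and I J :: "nat set" and i j :: nat
  assumes "n \<ge> 3" and "1 \<le> s" and "s \<le> n - 1"
    and "I \<subseteq> {1..n}" and "J \<subseteq> {1..n}"
    and "card I = s" and "card J = s + 1" and "n \<in> J"
    and "i \<in> {1..n} - I" and "j \<in> J - {Max (J - {n})}"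
  shows "(theta (Max (J - {n})) j J :: 'k::field sel) \<in> one_plus_units n (aid n s)
       \<and> degI n I i (theta (Max (J - {n})) j J :: 'k sel) =
           (if I = J - {Max (J - {n})} \<and> i = Max (J - {n}) then -1
            else if I = J - {j} \<and> i = j then 1 else 0)"
proof -
  obtain m where m_def: "m = Max (J - {n})" by blast
  have I1n: "I \<subseteq> {1..n}" and J1n: "J \<subseteq> {1..n}" using assms by auto
  have fJ: "finite J" using J1n finite_subset by blast
  have Jn: "J - {n} \<noteq> {}"
  proof
    assume "J - {n} = {}"
    then have "J \<subseteq> {n}" by auto
    then have "card J \<le> 1" using card_mono[of "{n}" J] by simp
    then show False using assms(2,7) by simp
  qed
  have mJ: "m \<in> J" "m \<noteq> n" using Max_in[OF _ Jn] fJ m_def by auto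
  have m1n: "m \<in> {1..n}" using mJ J1n by auto
  have jJ: "j \<in> J" "j \<noteq> m" using assms(10) m_def by auto
  have j1n: "j \<in> {1..n}" using jJ J1n by auto
  let ?Jm = "J - {m}" and ?Jj = "J - {j}"
  have Jm1n: "?Jm \<subseteq> {1..n}" and Jj1n: "?Jj \<subseteq> {1..n}" using J1n by auto
  have cJm: "card ?Jm = s" and cJj: "card ?Jj = s" using assms(7) mJ jJ fJ by auto
  have JmJj: "?Jm \<noteq> ?Jj" using mJ jJ by auto
  let ?th = "theta m j J :: 'k sel"
  define a1 :: "'k sel" where "a1 = smul (sy m - sone) (eI ?Jm)"
  define b1 :: "'k sel" where "b1 = smul (sx j - sone) (eI ?Jj)"
  have ym: "sy m - sone \<in> (Sn n :: 'k sel set)" using m1n by (simp add: SC_diff SC_sy SC_sone)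
  have xj: "sx j - sone \<in> (Sn n :: 'k sel set)" using j1n by (simp add: SC_diff SC_sx SC_sone)
  have eJm: "eI ?Jm \<in> (Sn n :: 'k sel set)" using Jm1n fJ by (simp add: SC_eI)
  have eJj: "eI ?Jj \<in> (Sn n :: 'k sel set)" using Jj1n fJ by (simp add: SC_eI)
  have a1S: "a1 \<in> Sn n" unfolding a1_def by (rule SC_smul[OF ym eJm])
  have b1S: "b1 \<in> Sn n" unfolding b1_def by (rule SC_smul[OF xj eJj])
  have fa1: "fin a1" and fb1: "fin b1" using a1S b1S SC_fin by blast+
  have thdef: "?th = smul (sone + a1) (sone + b1)" unfolding theta_def a1_def b1_def ..
  have thS: "?th \<in> Sn n" unfolding thdef by (intro SC_smul SC_add SC_sone a1S b1S)
  define t1 where "t1 = smul a1 sone"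
  define t2 where "t2 = smul b1 sone"
  define t3 where "t3 = smul a1 b1"
  define t3' where "t3' = smul (smul (smul a1 (sx j - sone)) (eI ?Jj)) sone"
  have dec: "?th - sone = t1 + t2 + t3"
    unfolding thdef t1_def t2_def t3_def
    by (rule P_inj) (simp_all add: fins fa1 fb1 P_smul P_add P_diff P_sone algebra_simps)
  have t1a: "t1 = a1" unfolding t1_def by (rule P_inj) (simp_all add: fins fa1 P_smul P_sone)
  have t2b: "t2 = b1" unfolding t2_def by (rule P_inj) (simp_all add: fins fb1 P_smul P_sone)
  have t33: "t3 = t3'" unfolding t3_def t3'_def b1_def
    by (rule P_inj) (simp_all add: fins fa1 P_smul P_sone mult.assoc)
  have t1m: "t1 \<in> pI n ?Jm" unfolding t1_def a1_def by (rule pI_mem[OF Jm1n ym SC_sone])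
  have t2m: "t2 \<in> pI n ?Jj" unfolding t2_def b1_def by (rule pI_mem[OF Jj1n xj SC_sone])
  have t3m: "t3 \<in> pI n ?Jm" unfolding t3_def a1_def by (rule pI_mem[OF Jm1n ym b1S])
  have t3m': "t3 \<in> pI n ?Jj" unfolding t33 t3'_def
    by (rule pI_mem[OF Jj1n SC_smul[OF a1S xj] SC_sone])
  have inaid: "x \<in> aid n s" if "x \<in> pI n I'" "I' \<subseteq> {1..n}" "card I' = s" for x :: "'k sel" and I'
  proof -
    have "x \<in> \<Union> {pI n I' | I'. I' \<subseteq> {1..n} \<and> card I' = s}" using that by auto
    then show ?thesis unfolding aid_def by (rule addcl.base)
  qed
  have part1: "?th \<in> one_plus_units n (aid n s)"
  proof -
    have thiS: "thinv m j J \<in> (Sn n :: 'k sel set)" unfolding thinv_def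
      using m1n j1n Jm1n Jj1n fJ
      by (intro SC_smul SC_add SC_sone SC_diff SC_sx SC_sy SC_eI) auto
    have "sunit n ?th" unfolding sunit_def
      using thS thiS theta_inv[OF fJ mJ(1) jJ(1) jJ(2)[symmetric]] by blast
    moreover have "?th - sone \<in> aid n s" unfolding dec
      by (intro aid_add inaid[OF t1m Jm1n cJm] inaid[OF t2m Jj1n cJj] inaid[OF t3m Jm1n cJm])
    ultimately show ?thesis by (simp add: one_plus_units_def)
  qed
  let ?N = "addcl (\<Union> {pI n I' | I'. I' \<subseteq> {1..n} \<and> card I' = card I \<and> I' \<noteq> I} \<union> aid n (card I + 1)) :: 'k sel set"
  have inN: "x \<in> ?N" if "x \<in> pI n I'" "I' \<subseteq> {1..n}" "card I' = s" "I' \<noteq> I" for x :: "'k sel" and I'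
  proof -
    have "x \<in> \<Union> {pI n I' | I'. I' \<subseteq> {1..n} \<and> card I' = card I \<and> I' \<noteq> I}"
      using that assms(6) by auto
    then show ?thesis by (intro addcl.base UnI1)
  qed
  have part2: "degI n I i ?th = (if I = ?Jm \<and> i = m then -1 else if I = ?Jj \<and> i = j then 1 else 0)"
  proof (cases "I = ?Jm")
    case True
    have mI: "m \<in> {1..n} - I" using True m1n by auto
    have g: "sy m - sone \<in> (SC ({1..n} - I) :: 'k sel set)" using mI by (simp add: SC_diff SC_sy SC_sone)
    have g0: "sy m - sone \<noteq> (0 :: 'k sel)"
    proof
      assume "sy m - sone = (0 :: 'k sel)"
      then have "(sy m - sone) (dz, delta m) = (0::'k)" by simp
      moreover have "(dz, delta m) \<noteq> mono1" by (auto simp: mono1_def delta_def fun_eq_iff)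
      ultimately show False by (simp add: sy_def sone_def)
    qed
    have "(?th - sone) - smul (sy m - sone) (eI I) = t2 + t3"
      using dec t1a True unfolding a1_def by (simp add: algebra_simps)
    moreover have "t2 + t3 \<in> ?N"
      using True JmJj by (intro addcl.add inN[OF t2m Jj1n cJj] inN[OF t3m' Jj1n cJj]) auto
    ultimately have r: "is_Irep n I ?th (\<lambda>a b. if a = dz \<and> b = dz then sy m - sone else 0)"
      by (intro Irep_single[OF g g0]) simp
    have M: "(\<lambda>a b. lphi (if a = dz \<and> b = dz then sy m - sone else (0::'k sel)))
        = (\<lambda>a b. if a = dz \<and> b = dz then lphi (sy m - sone) else 0)"
      by (auto simp: fun_eq_iff lphi_zero)
    have "detI n I ?th = sg (sg m (-1)) 1"
      unfolding detI_eq[OF I1n thS r] M fdet_single one_plus_lphi_y ..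
    then have "degI n I i ?th = lk (sg m (-1)) i" by (rule degI_eq)
    then show ?thesis using True JmJj by (simp add: lookup_single when_def)
  next
    case False
    show ?thesis
    proof (cases "I = ?Jj")
      case True
      have jI: "j \<in> {1..n} - I" using True j1n by auto
      have g: "sx j - sone \<in> (SC ({1..n} - I) :: 'k sel set)" using jI by (simp add: SC_diff SC_sx SC_sone)
      have g0: "sx j - sone \<noteq> (0 :: 'k sel)"
      proof
        assume "sx j - sone = (0 :: 'k sel)"
        then have "(sx j - sone) (delta j, dz) = (0::'k)" by simp
        moreover have "(delta j, dz) \<noteq> mono1" by (auto simp: mono1_def delta_def fun_eq_iff)
        ultimately show False by (simp add: sx_def sone_def)
      qed
      have "(?th - sone) - smul (sx j - sone) (eI I) = t1 + t3"
        using dec t2b True unfolding b1_def by (simp add: algebra_simps)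
      moreover have "t1 + t3 \<in> ?N"
        using False by (intro addcl.add inN[OF t1m Jm1n cJm] inN[OF t3m Jm1n cJm]) auto
      ultimately have r: "is_Irep n I ?th (\<lambda>a b. if a = dz \<and> b = dz then sx j - sone else 0)"
        by (intro Irep_single[OF g g0]) simp
      have M: "(\<lambda>a b. lphi (if a = dz \<and> b = dz then sx j - sone else (0::'k sel)))
          = (\<lambda>a b. if a = dz \<and> b = dz then lphi (sx j - sone) else 0)"
        by (auto simp: fun_eq_iff lphi_zero)
      have "detI n I ?th = sg (sg j 1) 1"
        unfolding detI_eq[OF I1n thS r] M fdet_single one_plus_lphi_x ..
      then have "degI n I i ?th = lk (sg j 1) i" by (rule degI_eq)
      then show ?thesis using True False by (simp add: lookup_single when_def)
    next
      case False2: False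
      have "?th - sone \<in> ?N" unfolding dec
        using False False2 by (intro addcl.add inN[OF t1m Jm1n cJm] inN[OF t2m Jj1n cJj] inN[OF t3m Jm1n cJm]) auto
      then have r: "is_Irep n I ?th (\<lambda>a b. 0)" by (rule Irep_zero)
      have M: "(\<lambda>a b. lphi (0::'k sel)) = (\<lambda>a b. if a = dz \<and> b = dz then 0 else 0)"
        by (auto simp: fun_eq_iff lphi_zero)
      have "detI n I ?th = sg 0 1"
        unfolding detI_eq[OF I1n thS r] M fdet_single by simp
      then have "degI n I i ?th = lk 0 i" by (rule degI_eq)
      then show ?thesis using False False2 by simp
    qed
  qed
  show ?thesis using part1 part2 unfolding m_def by simp
qed



end
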